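(* Let $G$ be the central product of normal subgroups $H,K$ ($G=HK$, $[H,K]=1$) with $H'\cap K'=1$, and let $D$ be a divisible abelian group with trivial action. Then the homomorphism $$\theta'=(\operatorname{res}^G_H,\operatorname{res}^G_K,\nu):\operatorname{H}^2(G,D)\to\operatorname{H}^2(H,D)\oplus\operatorname{H}^2(K,D)\oplus\operatorname{Hom}(H\otimes K,D)$$ is injective.
   Context: $X\otimes Y$ denotes the abelian tensor product $X/X'\otimes_{\mathbb{Z}}Y/Y'$. For $\xi\in\operatorname{H}^2(G,D)$ represented by a 2-cocycle $f$, $\nu(\xi)(hH'\otimes kK')=f(h,k)-f(k,h)$ for $h\in H$, $k\in K$. *)

theory Defs
  imports "HOL-Algebra.Algebra"
begin

text \<open>Inhomogeneous 2-cochains/cocycles/coboundaries of a group G with values in an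
abelian group D (written multiplicatively in HOL-Algebra), with trivial action.\<close>

definition cocycle2 :: "('g, 'a) monoid_scheme \<Rightarrow> ('d, 'b) monoid_scheme \<Rightarrow> ('g \<Rightarrow> 'g \<Rightarrow> 'd) \<Rightarrow> bool" where
  "cocycle2 G D f \<longleftrightarrow>
     (\<forall>g\<in>carrier G. \<forall>h\<in>carrier G. f g h \<in> carrier D) \<and>
     (\<forall>g\<in>carrier G. \<forall>h\<in>carrier G. \<forall>k\<in>carrier G.
        f g h \<otimes>\<^bsub>D\<^esub> f (g \<otimes>\<^bsub>G\<^esub> h) k = f h k \<otimes>\<^bsub>D\<^esub> f g (h \<otimes>\<^bsub>G\<^esub> k))"

definition coboundary2 :: "('g, 'a) monoid_scheme \<Rightarrow> ('d, 'b) monoid_scheme \<Rightarrow> ('g \<Rightarrow> 'g \<Rightarrow> 'd) \<Rightarrow> bool" where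
  "coboundary2 G D f \<longleftrightarrow>
     (\<exists>c. (\<forall>g\<in>carrier G. c g \<in> carrier D) \<and>
          (\<forall>g\<in>carrier G. \<forall>h\<in>carrier G.
             f g h = c h \<otimes>\<^bsub>D\<^esub> inv\<^bsub>D\<^esub> (c (g \<otimes>\<^bsub>G\<^esub> h)) \<otimes>\<^bsub>D\<^esub> c g))"

definition cohomologous2 :: "('g, 'a) monoid_scheme \<Rightarrow> ('d, 'b) monoid_scheme \<Rightarrow> ('g \<Rightarrow> 'g \<Rightarrow> 'd) \<Rightarrow> ('g \<Rightarrow> 'g \<Rightarrow> 'd) \<Rightarrow> bool" where
  "cohomologous2 G D f1 f2 \<longleftrightarrow> coboundary2 G D (\<lambda>g h. f1 g h \<otimes>\<^bsub>D\<^esub> inv\<^bsub>D\<^esub> (f2 g h))"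

abbreviation restr_grp :: "('g, 'a) monoid_scheme \<Rightarrow> 'g set \<Rightarrow> ('g, 'a) monoid_scheme" where
  "restr_grp G S \<equiv> G\<lparr>carrier := S\<rparr>"

text \<open>Value of nu(f) on the generator hH' (x) kK' of H (x) K: f(h,k) - f(k,h).\<close>
definition nu_val :: "('g, 'a) monoid_scheme \<Rightarrow> ('d, 'b) monoid_scheme \<Rightarrow> ('g \<Rightarrow> 'g \<Rightarrow> 'd) \<Rightarrow> 'g \<Rightarrow> 'g \<Rightarrow> 'd" where
  "nu_val G D f h k = f h k \<otimes>\<^bsub>D\<^esub> inv\<^bsub>D\<^esub> (f k h)"

definition divisible_group :: "('d, 'b) monoid_scheme \<Rightarrow> bool" where
  "divisible_group D \<longleftrightarrow> (\<forall>x\<in>carrier D. \<forall>n::nat. n > 0 \<longrightarrow> (\<exists>y\<in>carrier D. y [^]\<^bsub>D\<^esub> n = x))"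

end

theory Submission
  imports Defs
begin

lemma restr_mult [simp]: "x \<otimes>\<^bsub>G\<lparr>carrier := A\<rparr>\<^esub> y = x \<otimes>\<^bsub>G\<^esub> y" by simp
lemma restr_carrier [simp]: "carrier (G\<lparr>carrier := A\<rparr>) = A" by simp


lemma (in group) cancel_l [simp]: "a \<in> carrier G \<Longrightarrow> b \<in> carrier G \<Longrightarrow> inv a \<otimes> (a \<otimes> b) = b"
  by (simp add: m_assoc[symmetric])
lemma (in group) cancel_r [simp]: "a \<in> carrier G \<Longrightarrow> b \<in> carrier G \<Longrightarrow> a \<otimes> b \<otimes> inv b = a"
  by (simp add: m_assoc)

lemma (in group) cancel_aux:
  assumes "a \<in> carrier G" "b \<in> carrier G" "c \<in> carrier G" "d \<in> carrier G" "a \<otimes> b = c \<otimes> d"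
  shows "inv c \<otimes> a = d \<otimes> inv b"
proof -
  have "inv c \<otimes> a = inv c \<otimes> (a \<otimes> b \<otimes> inv b)" using assms(1,2) by simp
  also have "\<dots> = inv c \<otimes> (c \<otimes> d \<otimes> inv b)" by (simp only: assms(5))
  also have "\<dots> = d \<otimes> inv b" using assms by (simp add: m_assoc[symmetric])
  finally show ?thesis .
qed

lemma (in group) conj_aux:
  assumes "t \<in> carrier G" "a \<in> carrier G" "t' \<in> carrier G" "b \<in> carrier G"
  shows "t \<otimes> a \<otimes> (t' \<otimes> b) = (t \<otimes> (a \<otimes> t' \<otimes> inv a)) \<otimes> (a \<otimes> b)"
  using assms by (simp add: m_assoc)

lemma (in group) comm_aux:
  assumes "a \<in> carrier G" "t \<in> carrier G"
  shows "a \<otimes> t \<otimes> inv a \<otimes> inv t \<otimes> t = a \<otimes> t \<otimes> inv a"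
  using assms by (simp add: m_assoc)

lemma (in group) inv_aux:
  assumes "b \<in> carrier G" "u \<in> carrier G"
  shows "b \<otimes> u \<otimes> inv b \<otimes> b = b \<otimes> u"
  using assms by (simp add: m_assoc)

lemma (in comm_group) ceq_aux:
  assumes "a \<in> carrier G" "b \<in> carrier G" "c \<in> carrier G" "d \<in> carrier G" "inv a \<otimes> b = c \<otimes> inv d"
  shows "b \<otimes> d = a \<otimes> c"
proof -
  have "b \<otimes> d = a \<otimes> (inv a \<otimes> b) \<otimes> d" using assms(1,2) by (simp add: m_assoc[symmetric])
  also have "\<dots> = a \<otimes> (c \<otimes> inv d) \<otimes> d" by (simp only: assms(5))
  also have "\<dots> = a \<otimes> c" using assms by (simp add: m_assoc)
  finally show ?thesis .
qed

lemma (in comm_group) swap_aux: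
  assumes "a \<in> carrier G" "b \<in> carrier G" "c \<in> carrier G" "d \<in> carrier G"
  shows "(a \<otimes> b) \<otimes> (c \<otimes> d) = (a \<otimes> c) \<otimes> (b \<otimes> d)"
  using assms by (simp add: m_ac)

locale extctx = group E + D: comm_group D
  for E (structure) and D +
  fixes S and \<phi>
  assumes divD: "divisible_group D"
    and subS: "subgroup S E"
    and phihom: "\<phi> \<in> hom (E\<lparr>carrier := S\<rparr>) D"
    and commS: "\<forall>a\<in>carrier E. \<forall>b\<in>carrier E. a \<otimes> b \<otimes> inv a \<otimes> inv b \<in> S \<and> \<phi> (a \<otimes> b \<otimes> inv a \<otimes> inv b) = \<one>\<^bsub>D\<^esub>"
begin

definition okrel where
  "okrel M \<longleftrightarrow> (\<forall>x a b. (x,a)\<in>M \<longrightarrow> (x,b)\<in>M \<longrightarrow> a = b) \<and> subgroup (Domain M) E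
     \<and> (\<forall>s\<in>S. (s, \<phi> s) \<in> M)
     \<and> (\<forall>x y a b. (x,a)\<in>M \<longrightarrow> (y,b)\<in>M \<longrightarrow> (x \<otimes> y, a \<otimes>\<^bsub>D\<^esub> b) \<in> M)
     \<and> Range M \<subseteq> carrier D"

definition psi where "psi M x = (THE a. (x,a) \<in> M)"

lemma okrel_sv: "okrel M \<Longrightarrow> (x,a)\<in>M \<Longrightarrow> (x,b)\<in>M \<Longrightarrow> a = b"
  unfolding okrel_def by metis
lemma okrel_sub: "okrel M \<Longrightarrow> subgroup (Domain M) E"
  unfolding okrel_def by metis
lemma okrel_S: "okrel M \<Longrightarrow> s \<in> S \<Longrightarrow> (s, \<phi> s) \<in> M"
  unfolding okrel_def by metis
lemma okrel_mult: "okrel M \<Longrightarrow> (x,a)\<in>M \<Longrightarrow> (y,b)\<in>M \<Longrightarrow> (x \<otimes> y, a \<otimes>\<^bsub>D\<^esub> b) \<in> M"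
  unfolding okrel_def by metis
lemma okrel_range: "okrel M \<Longrightarrow> (x,a)\<in>M \<Longrightarrow> a \<in> carrier D"
  unfolding okrel_def by (meson RangeI subsetD)

lemma phi_mult: "x \<in> S \<Longrightarrow> y \<in> S \<Longrightarrow> \<phi> (x \<otimes> y) = \<phi> x \<otimes>\<^bsub>D\<^esub> \<phi> y"
  using phihom unfolding hom_def by simp

lemma phi_closed: "x \<in> S \<Longrightarrow> \<phi> x \<in> carrier D"
  using phihom unfolding hom_def by (simp add: Pi_iff)

lemma psi_eq: "okrel M \<Longrightarrow> (x,a) \<in> M \<Longrightarrow> psi M x = a"
  unfolding psi_def using okrel_sv by (metis the_equality)

lemma psi_in: "okrel M \<Longrightarrow> x \<in> Domain M \<Longrightarrow> (x, psi M x) \<in> M"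
  using psi_eq by (metis DomainE)

lemma psi_hom: assumes "okrel M" shows "psi M \<in> hom (E\<lparr>carrier := Domain M\<rparr>) D"
proof (rule homI)
  fix x assume "x \<in> carrier (E\<lparr>carrier := Domain M\<rparr>)"
  then have x: "x \<in> Domain M" by (simp only: restr_carrier)
  show "psi M x \<in> carrier D"
    using psi_in[OF assms x] okrel_range[OF assms] by metis
next
  fix x y assume "x \<in> carrier (E\<lparr>carrier := Domain M\<rparr>)" "y \<in> carrier (E\<lparr>carrier := Domain M\<rparr>)"
  then have x: "x \<in> Domain M" and y: "y \<in> Domain M" by (simp_all only: restr_carrier)
  have "(x \<otimes> y, psi M x \<otimes>\<^bsub>D\<^esub> psi M y) \<in> M"
    using okrel_mult[OF assms psi_in[OF assms x] psi_in[OF assms y]] .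
  hence "psi M (x \<otimes> y) = psi M x \<otimes>\<^bsub>D\<^esub> psi M y" using psi_eq[OF assms] by metis
  thus "psi M (x \<otimes>\<^bsub>E\<lparr>carrier := Domain M\<rparr>\<^esub> y) = psi M x \<otimes>\<^bsub>D\<^esub> psi M y" by (simp only: restr_mult)
qed

lemma psi_group_hom: assumes "okrel M" shows "group_hom (E\<lparr>carrier := Domain M\<rparr>) D (psi M)"
proof (rule group_hom.intro)
  show "group (E\<lparr>carrier := Domain M\<rparr>)"
    using okrel_sub[OF assms] is_group by (rule subgroup.subgroup_is_group)
  show "group D" by (rule D.is_group)
  show "group_hom_axioms (E\<lparr>carrier := Domain M\<rparr>) D (psi M)"
    using psi_hom[OF assms] by (simp only: group_hom_axioms_def)
qed

lemma conj_in:
  assumes ok: "okrel M" and t: "t \<in> Domain M" and a: "a \<in> carrier E"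
  shows "a \<otimes> t \<otimes> inv a \<in> Domain M \<and> psi M (a \<otimes> t \<otimes> inv a) = psi M t"
proof -
  have tc: "t \<in> carrier E" using subgroup.subset[OF okrel_sub[OF ok]] t by blast
  let ?c = "a \<otimes> t \<otimes> inv a \<otimes> inv t"
  have c: "?c \<in> S" "\<phi> ?c = \<one>\<^bsub>D\<^esub>" using commS a tc by blast+
  have "(?c, \<one>\<^bsub>D\<^esub>) \<in> M" using okrel_S[OF ok c(1)] c(2) by simp
  from okrel_mult[OF ok this psi_in[OF ok t]]
  have "(a \<otimes> t \<otimes> inv a, \<one>\<^bsub>D\<^esub> \<otimes>\<^bsub>D\<^esub> psi M t) \<in> M"
    using comm_aux[OF a tc] by simp
  moreover have "psi M t \<in> carrier D" using okrel_range[OF ok psi_in[OF ok t]] .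
  ultimately have "(a \<otimes> t \<otimes> inv a, psi M t) \<in> M" by simp
  thus ?thesis using psi_eq[OF ok] by blast
qed

lemma psi_pow:
  assumes ok: "okrel M" and x: "x \<in> Domain M"
  shows "psi M (x [^] (q::int)) = psi M x [^]\<^bsub>D\<^esub> q"
proof -
  have "psi M (x [^] q) = psi M (x [^]\<^bsub>E\<lparr>carrier := Domain M\<rparr>\<^esub> q)"
    using int_pow_consistent[OF okrel_sub[OF ok] x] by simp
  also have "\<dots> = psi M x [^]\<^bsub>D\<^esub> q"
    using group_hom.hom_int_pow[OF psi_group_hom[OF ok]] x by simp
  finally show ?thesis .
qed

lemma psi_one: assumes ok: "okrel M" shows "psi M \<one> = \<one>\<^bsub>D\<^esub>"
proof -
  have "psi M \<one>\<^bsub>E\<lparr>carrier := Domain M\<rparr>\<^esub> = \<one>\<^bsub>D\<^esub>"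
    using group_hom.hom_one[OF psi_group_hom[OF ok]] .
  thus ?thesis by simp
qed

lemma psi_inv_mult:
  assumes ok: "okrel M" and x: "x \<in> Domain M" and y: "y \<in> Domain M"
  shows "psi M (inv x \<otimes> y) = inv\<^bsub>D\<^esub> (psi M x) \<otimes>\<^bsub>D\<^esub> psi M y"
proof -
  have sub: "subgroup (Domain M) E" by (rule okrel_sub[OF ok])
  have ix: "inv x \<in> Domain M" using subgroup.m_inv_closed[OF sub x] .
  have "psi M (inv x \<otimes> y) = psi M (inv x) \<otimes>\<^bsub>D\<^esub> psi M y"
    using psi_eq[OF ok okrel_mult[OF ok psi_in[OF ok ix] psi_in[OF ok y]]] .
  moreover have "psi M (inv x) = inv\<^bsub>D\<^esub> (psi M x)"
  proof -
    have "psi M (inv\<^bsub>E\<lparr>carrier := Domain M\<rparr>\<^esub> x) = inv\<^bsub>D\<^esub> (psi M x)"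
      using group_hom.hom_inv[OF psi_group_hom[OF ok]] x by simp
    thus ?thesis using m_inv_consistent[OF sub x] by simp
  qed
  ultimately show ?thesis by simp
qed

lemma root_exists:
  assumes ok: "okrel M" and g: "g \<in> carrier E"
  shows "\<exists>y\<in>carrier D. \<forall>m::int. g [^] m \<in> Domain M \<longrightarrow> psi M (g [^] m) = y [^]\<^bsub>D\<^esub> m"
proof (cases "\<exists>n::nat. 0 < n \<and> g [^] (int n) \<in> Domain M")
  case True
  have sub: "subgroup (Domain M) E" by (rule okrel_sub[OF ok])
  define n0 where "n0 = (LEAST n::nat. 0 < n \<and> g [^] (int n) \<in> Domain M)"
  have n0: "0 < n0" "g [^] (int n0) \<in> Domain M"
    using LeastI_ex[OF True] unfolding n0_def by blast+
  have nmin: "\<not> (0 < n \<and> g [^] (int n) \<in> Domain M)" if "n < n0" for n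
    using not_less_Least[OF that[unfolded n0_def]] by blast
  have gn0D: "psi M (g [^] (int n0)) \<in> carrier D"
    using okrel_range[OF ok psi_in[OF ok n0(2)]] .
  obtain y where y: "y \<in> carrier D" "y [^]\<^bsub>D\<^esub> n0 = psi M (g [^] (int n0))"
    using divD gn0D n0(1) unfolding divisible_group_def by blast
  have yi: "y [^]\<^bsub>D\<^esub> (int n0) = psi M (g [^] (int n0))"
    using y(2) by (simp add: int_pow_int)
  show ?thesis
  proof (intro bexI[OF _ y(1)] allI impI)
    fix m :: int assume gm: "g [^] m \<in> Domain M"
    define q where "q = m div int n0"
    define r where "r = m mod int n0"
    have mqr: "m = int n0 * q + r" unfolding q_def r_def by simp
    have r0: "0 \<le> r" "r < int n0" unfolding r_def using n0(1) by simp_all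
    have gnq: "g [^] (int n0 * q) \<in> Domain M"
      using int_pow_pow[OF g, of "int n0" q] subgroup_int_pow_closed[OF sub n0(2), of q] by simp
    have split: "g [^] m = g [^] (int n0 * q) \<otimes> g [^] r"
      using int_pow_mult[OF g, of "int n0 * q" r] mqr by simp
    have "g [^] r = inv (g [^] (int n0 * q)) \<otimes> g [^] m"
      using split g by (simp add: m_assoc[symmetric])
    hence grD: "g [^] r \<in> Domain M"
      using subgroup.m_closed[OF sub subgroup.m_inv_closed[OF sub gnq] gm] by simp
    have "r = 0"
    proof (rule ccontr)
      assume "r \<noteq> 0"
      hence "0 < nat r" "nat r < n0" using r0 by simp_all
      moreover have "g [^] (int (nat r)) \<in> Domain M" using grD r0 by simp
      ultimately show False using nmin by blast
    qed
    hence "m = int n0 * q" using mqr by simp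
    hence "psi M (g [^] m) = psi M ((g [^] (int n0)) [^] q)"
      using int_pow_pow[OF g] by simp
    also have "\<dots> = psi M (g [^] (int n0)) [^]\<^bsub>D\<^esub> q"
      using psi_pow[OF ok n0(2)] .
    also have "\<dots> = (y [^]\<^bsub>D\<^esub> (int n0)) [^]\<^bsub>D\<^esub> q" using yi by simp
    also have "\<dots> = y [^]\<^bsub>D\<^esub> m" using D.int_pow_pow[OF y(1)] \<open>m = int n0 * q\<close> by simp
    finally show "psi M (g [^] m) = y [^]\<^bsub>D\<^esub> m" .
  qed
next
  case False
  have sub: "subgroup (Domain M) E" by (rule okrel_sub[OF ok])
  show ?thesis
  proof (intro bexI[OF _ D.one_closed] allI impI)
    fix m :: int assume gm: "g [^] m \<in> Domain M"
    have "m = 0"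
    proof (rule ccontr)
      assume m: "m \<noteq> 0"
      show False
      proof (cases "m > 0")
        case True
        hence "g [^] (int (nat m)) \<in> Domain M" using gm by simp
        thus False using False True by (metis zero_less_nat_eq)
      next
        case False2: False
        hence "g [^] (- m) \<in> Domain M" using gm int_pow_neg[OF g, of m] subgroup.m_inv_closed[OF sub] by simp
        hence "g [^] (int (nat (- m))) \<in> Domain M" using False2 by simp
        thus False using False False2 m by (metis neg_0_less_iff_less not_less_iff_gr_or_eq zero_less_nat_eq)
      qed
    qed
    thus "psi M (g [^] m) = \<one>\<^bsub>D\<^esub> [^]\<^bsub>D\<^esub> m" using psi_one[OF ok] by simp
  qed
qed


lemma step:
  assumes ok: "okrel M" and g: "g \<in> carrier E" and gT: "g \<notin> Domain M"
  shows "\<exists>M'. okrel M' \<and> M \<subseteq> M' \<and> M' \<noteq> M"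
proof -
  define T where "T = Domain M"
  define \<psi> where "\<psi> = psi M"
  have sub: "subgroup T E" unfolding T_def by (rule okrel_sub[OF ok])
  have Tc: "t \<in> carrier E" if "t \<in> T" for t using subgroup.subset[OF sub] that by blast
  have psiD: "\<psi> t \<in> carrier D" if "t \<in> T" for t
    unfolding \<psi>_def using okrel_range[OF ok psi_in[OF ok that[unfolded T_def]]] .
  obtain y where y: "y \<in> carrier D" and Py: "\<And>m::int. g [^] m \<in> T \<Longrightarrow> \<psi> (g [^] m) = y [^]\<^bsub>D\<^esub> m"
    using root_exists[OF ok g] unfolding T_def \<psi>_def by blast
  define M' where "M' = {p. \<exists>t (k::int). t \<in> T \<and> p = (t \<otimes> g [^] k, \<psi> t \<otimes>\<^bsub>D\<^esub> y [^]\<^bsub>D\<^esub> k)}"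
  have memM': "(t \<otimes> g [^] k, \<psi> t \<otimes>\<^bsub>D\<^esub> y [^]\<^bsub>D\<^esub> k) \<in> M'" if "t \<in> T" for t and k :: int
    unfolding M'_def using that by blast
  have M'E: "\<exists>t (k::int). t \<in> T \<and> x = t \<otimes> g [^] k \<and> a = \<psi> t \<otimes>\<^bsub>D\<^esub> y [^]\<^bsub>D\<^esub> k" if "(x,a) \<in> M'" for x a
    using that unfolding M'_def by blast
  have domE: "\<exists>t (k::int). t \<in> T \<and> x = t \<otimes> g [^] k" if "x \<in> Domain M'" for x
    using that M'E by blast
  have domI: "t \<otimes> g [^] k \<in> Domain M'" if "t \<in> T" for t and k :: int
    using memM'[OF that] by blast
  have conj: "a \<otimes> t \<otimes> inv a \<in> T \<and> \<psi> (a \<otimes> t \<otimes> inv a) = \<psi> t" if "t \<in> T" "a \<in> carrier E" for t a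
    using conj_in[OF ok that(1)[unfolded T_def] that(2)] unfolding T_def \<psi>_def .
  have psimult: "\<psi> (t \<otimes> u) = \<psi> t \<otimes>\<^bsub>D\<^esub> \<psi> u" if "t \<in> T" "u \<in> T" for t u
    unfolding \<psi>_def using psi_eq[OF ok okrel_mult[OF ok psi_in[OF ok that(1)[unfolded T_def]] psi_in[OF ok that(2)[unfolded T_def]]]] .
  have sub1: "M \<subseteq> M'"
  proof
    fix p assume p: "p \<in> M"
    obtain x a where xa: "p = (x,a)" by (cases p)
    have xT: "x \<in> T" unfolding T_def using p xa by blast
    have a: "a = \<psi> x" unfolding \<psi>_def using psi_eq[OF ok] p xa by simp
    have "(x \<otimes> g [^] (0::int), \<psi> x \<otimes>\<^bsub>D\<^esub> y [^]\<^bsub>D\<^esub> (0::int)) \<in> M'" by (rule memM'[OF xT])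
    thus "p \<in> M'" using xa a Tc[OF xT] psiD[OF xT] by simp
  qed
  have neq: "M' \<noteq> M"
  proof
    assume "M' = M"
    have "\<one> \<otimes> g [^] (1::int) \<in> Domain M'" using domI subgroup.one_closed[OF sub] by blast
    hence "g \<in> Domain M'" using g by simp
    thus False using gT \<open>M' = M\<close> by simp
  qed
  have sv: "a = b" if h: "(x,a) \<in> M'" "(x,b) \<in> M'" for x a b
  proof -
    obtain t and k :: int where tk: "t \<in> T" "x = t \<otimes> g [^] k" "a = \<psi> t \<otimes>\<^bsub>D\<^esub> y [^]\<^bsub>D\<^esub> k"
      using M'E[OF h(1)] by blast
    obtain t' and l :: int where tl: "t' \<in> T" "x = t' \<otimes> g [^] l" "b = \<psi> t' \<otimes>\<^bsub>D\<^esub> y [^]\<^bsub>D\<^esub> l"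
      using M'E[OF h(2)] by blast
    have eq: "t \<otimes> g [^] k = t' \<otimes> g [^] l" using tk tl by simp
    have "inv t' \<otimes> t = g [^] l \<otimes> inv (g [^] k)"
      by (rule cancel_aux[OF Tc[OF tk(1)] int_pow_closed[OF g] Tc[OF tl(1)] int_pow_closed[OF g] eq])
    also have "\<dots> = g [^] (l - k)" using int_pow_diff[OF g] by simp
    finally have e1: "inv t' \<otimes> t = g [^] (l - k)" .
    have "inv t' \<otimes> t \<in> T" using sub tk(1) tl(1) by (simp add: subgroup.m_closed subgroup.m_inv_closed)
    hence "\<psi> (inv t' \<otimes> t) = y [^]\<^bsub>D\<^esub> (l - k)" using Py e1 by simp
    also have "\<dots> = y [^]\<^bsub>D\<^esub> l \<otimes>\<^bsub>D\<^esub> inv\<^bsub>D\<^esub> (y [^]\<^bsub>D\<^esub> k)" using D.int_pow_diff[OF y] by simp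
    finally have "inv\<^bsub>D\<^esub> (\<psi> t') \<otimes>\<^bsub>D\<^esub> \<psi> t = y [^]\<^bsub>D\<^esub> l \<otimes>\<^bsub>D\<^esub> inv\<^bsub>D\<^esub> (y [^]\<^bsub>D\<^esub> k)"
      using psi_inv_mult[OF ok tl(1)[unfolded T_def] tk(1)[unfolded T_def]] unfolding \<psi>_def by simp
    hence "\<psi> t \<otimes>\<^bsub>D\<^esub> y [^]\<^bsub>D\<^esub> k = \<psi> t' \<otimes>\<^bsub>D\<^esub> y [^]\<^bsub>D\<^esub> l"
      by (rule D.ceq_aux[OF psiD[OF tl(1)] psiD[OF tk(1)] D.int_pow_closed[OF y] D.int_pow_closed[OF y]])
    thus "a = b" using tk tl by simp
  qed
  have mult: "(x \<otimes> x', a \<otimes>\<^bsub>D\<^esub> a') \<in> M'" if h: "(x,a) \<in> M'" "(x',a') \<in> M'" for x a x' a'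
  proof -
    obtain t and k :: int where tk: "t \<in> T" "x = t \<otimes> g [^] k" "a = \<psi> t \<otimes>\<^bsub>D\<^esub> y [^]\<^bsub>D\<^esub> k"
      using M'E[OF h(1)] by blast
    obtain t' and l :: int where tl: "t' \<in> T" "x' = t' \<otimes> g [^] l" "a' = \<psi> t' \<otimes>\<^bsub>D\<^esub> y [^]\<^bsub>D\<^esub> l"
      using M'E[OF h(2)] by blast
    define c where "c = g [^] k \<otimes> t' \<otimes> inv (g [^] k)"
    have c: "c \<in> T" "\<psi> c = \<psi> t'" using conj[OF tl(1), of "g [^] k"] g unfolding c_def by simp_all
    have tc: "t \<otimes> c \<in> T" using sub tk(1) c(1) by (simp add: subgroup.m_closed)
    have "x \<otimes> x' = (t \<otimes> c) \<otimes> (g [^] k \<otimes> g [^] l)"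
      unfolding tk(2) tl(2) c_def by (rule conj_aux[OF Tc[OF tk(1)] int_pow_closed[OF g] Tc[OF tl(1)] int_pow_closed[OF g]])
    also have "\<dots> = (t \<otimes> c) \<otimes> g [^] (k + l)" using int_pow_mult[OF g] by simp
    finally have xx: "x \<otimes> x' = (t \<otimes> c) \<otimes> g [^] (k + l)" .
    have "a \<otimes>\<^bsub>D\<^esub> a' = (\<psi> t \<otimes>\<^bsub>D\<^esub> \<psi> t') \<otimes>\<^bsub>D\<^esub> (y [^]\<^bsub>D\<^esub> k \<otimes>\<^bsub>D\<^esub> y [^]\<^bsub>D\<^esub> l)"
      unfolding tk(3) tl(3) by (rule D.swap_aux[OF psiD[OF tk(1)] D.int_pow_closed[OF y] psiD[OF tl(1)] D.int_pow_closed[OF y]])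
    also have "\<dots> = \<psi> (t \<otimes> c) \<otimes>\<^bsub>D\<^esub> y [^]\<^bsub>D\<^esub> (k + l)"
      using psimult[OF tk(1) c(1)] c(2) D.int_pow_mult[OF y] by simp
    finally have aa: "a \<otimes>\<^bsub>D\<^esub> a' = \<psi> (t \<otimes> c) \<otimes>\<^bsub>D\<^esub> y [^]\<^bsub>D\<^esub> (k + l)" .
    show ?thesis unfolding xx aa by (rule memM'[OF tc])
  qed
  have subM': "subgroup (Domain M') E"
  proof (rule subgroupI)
    show "Domain M' \<subseteq> carrier E"
    proof
      fix x assume "x \<in> Domain M'"
      then obtain t k where "t \<in> T" "x = t \<otimes> g [^] (k::int)" using domE by blast
      thus "x \<in> carrier E" using Tc g by simp
    qed
    show "Domain M' \<noteq> {}" using domI[OF subgroup.one_closed[OF sub], of 0] by blast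
    fix x assume "x \<in> Domain M'"
    then obtain t k where tk: "t \<in> T" "x = t \<otimes> g [^] (k::int)" using domE by blast
    have it: "inv t \<in> T" using sub tk(1) by (simp add: subgroup.m_inv_closed)
    have cc: "g [^] (-k) \<otimes> inv t \<otimes> inv (g [^] (-k)) \<in> T" using conj[OF it, of "g [^] (-k)"] g by simp
    have "inv x = inv (g [^] k) \<otimes> inv t" using tk Tc[OF tk(1)] g by (simp add: inv_mult_group)
    also have "\<dots> = g [^] (-k) \<otimes> inv t" using int_pow_neg[OF g] by simp
    also have "\<dots> = (g [^] (-k) \<otimes> inv t \<otimes> inv (g [^] (-k))) \<otimes> g [^] (-k)"
      by (rule inv_aux[OF int_pow_closed[OF g] inv_closed[OF Tc[OF tk(1)]], symmetric])
    finally show "inv x \<in> Domain M'" using domI[OF cc] by simp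
  next
    fix x x' assume "x \<in> Domain M'" "x' \<in> Domain M'"
    then obtain a a' where "(x,a) \<in> M'" "(x',a') \<in> M'" by blast
    thus "x \<otimes> x' \<in> Domain M'" using mult by blast
  qed
  have Sin: "(s, \<phi> s) \<in> M'" if "s \<in> S" for s
    using okrel_S[OF ok that] sub1 by blast
  have rng: "Range M' \<subseteq> carrier D"
  proof
    fix a assume "a \<in> Range M'"
    then obtain x where "(x,a) \<in> M'" by blast
    then obtain t k where "t \<in> T" "a = \<psi> t \<otimes>\<^bsub>D\<^esub> y [^]\<^bsub>D\<^esub> (k::int)" using M'E by blast
    thus "a \<in> carrier D" using psiD y by simp
  qed
  have "okrel M'" unfolding okrel_def using sv subM' Sin mult rng by blast
  thus ?thesis using sub1 neq by blast
qed


lemma okrel_M0: "okrel {p. \<exists>s\<in>S. p = (s, \<phi> s)}"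
proof -
  let ?M = "{p. \<exists>s\<in>S. p = (s, \<phi> s)}"
  have dom: "Domain ?M = S" by force
  show ?thesis unfolding okrel_def dom
    using subS phi_mult phi_closed subgroup.m_closed[OF subS] by (auto simp del: restr_mult restr_carrier)
qed

lemma exists_total: "\<exists>M. okrel M \<and> Domain M = carrier E"
proof -
  have "\<exists>M\<in>Collect okrel. \<forall>N\<in>Collect okrel. M \<subseteq> N \<longrightarrow> N = M"
  proof (rule subset_Zorn_nonempty)
    show "(Collect okrel) \<noteq> {}" using okrel_M0 by blast
  next
    fix C assume Cne: "C \<noteq> {}" and ch: "subset.chain (Collect okrel) C"
    have CA: "\<And>M. M \<in> C \<Longrightarrow> okrel M" using ch unfolding subset_chain_def by blast
    have cmp: "\<And>A1 A2. A1 \<in> C \<Longrightarrow> A2 \<in> C \<Longrightarrow> A1 \<subseteq> A2 \<or> A2 \<subseteq> A1" using ch unfolding subset_chain_def by blast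
    obtain M0 where M0: "M0 \<in> C" using Cne by blast
    have two: "\<exists>M\<in>C. p \<in> M \<and> q \<in> M" if h: "p \<in> \<Union>C" "q \<in> \<Union>C" for p q
    proof -
      obtain A1 A2 where "A1 \<in> C" "A2 \<in> C" "p \<in> A1" "q \<in> A2" using h by blast
      thus ?thesis using cmp by blast
    qed
    have sv: "\<forall>x a b. (x,a)\<in>\<Union>C \<longrightarrow> (x,b)\<in>\<Union>C \<longrightarrow> a = b"
      using two CA okrel_sv by metis
    have mult: "\<forall>x y a b. (x,a)\<in>\<Union>C \<longrightarrow> (y,b)\<in>\<Union>C \<longrightarrow> (x \<otimes> y, a \<otimes>\<^bsub>D\<^esub> b) \<in> \<Union>C"
    proof (intro allI impI)
      fix x y a b assume "(x,a)\<in>\<Union>C" "(y,b)\<in>\<Union>C"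
      then obtain M where "M \<in> C" "(x,a) \<in> M" "(y,b) \<in> M" using two by blast
      thus "(x \<otimes> y, a \<otimes>\<^bsub>D\<^esub> b) \<in> \<Union>C" using okrel_mult CA by blast
    qed
    have Sin: "\<forall>s\<in>S. (s, \<phi> s) \<in> \<Union>C" using okrel_S CA M0 by blast
    have rng: "Range (\<Union>C) \<subseteq> carrier D"
    proof
      fix a assume "a \<in> Range (\<Union>C)"
      then obtain x M where "M \<in> C" "(x,a) \<in> M" by blast
      thus "a \<in> carrier D" using okrel_range CA by blast
    qed
    have subg: "subgroup (Domain (\<Union>C)) E"
    proof (rule subgroupI)
      show "Domain (\<Union>C) \<subseteq> carrier E"
      proof
        fix x assume "x \<in> Domain (\<Union>C)"
        then obtain a M where "M \<in> C" "(x,a) \<in> M" by blast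
        hence "x \<in> Domain M" "subgroup (Domain M) E" using CA okrel_sub by blast+
        thus "x \<in> carrier E" using subgroup.subset by blast
      qed
      show "Domain (\<Union>C) \<noteq> {}"
      proof -
        have "\<one> \<in> Domain M0" using subgroup.one_closed[OF okrel_sub[OF CA[OF M0]]] .
        thus ?thesis using M0 by blast
      qed
    next
      fix x assume "x \<in> Domain (\<Union>C)"
      then obtain a M where M: "M \<in> C" "(x,a) \<in> M" by blast
      hence "inv x \<in> Domain M" using subgroup.m_inv_closed[OF okrel_sub[OF CA[OF M(1)]]] by blast
      thus "inv x \<in> Domain (\<Union>C)" using M(1) by blast
    next
      fix x y assume "x \<in> Domain (\<Union>C)" "y \<in> Domain (\<Union>C)"
      then obtain a b where "(x,a) \<in> \<Union>C" "(y,b) \<in> \<Union>C" by blast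
      thus "x \<otimes> y \<in> Domain (\<Union>C)" using mult by blast
    qed
    have "okrel (\<Union>C)" unfolding okrel_def using sv subg Sin mult rng by blast
    thus "\<Union>C \<in> (Collect okrel)" by simp
  qed
  then obtain M where ok: "okrel M" and max: "\<And>N. okrel N \<Longrightarrow> M \<subseteq> N \<Longrightarrow> N = M" by blast
  have "Domain M = carrier E"
  proof (rule ccontr)
    assume ne: "Domain M \<noteq> carrier E"
    have "Domain M \<subseteq> carrier E" using subgroup.subset[OF okrel_sub[OF ok]] .
    then obtain g where "g \<in> carrier E" "g \<notin> Domain M" using ne by blast
    then obtain M' where "okrel M'" "M \<subseteq> M'" "M' \<noteq> M" using step[OF ok] by blast
    thus False using max by blast
  qed
  thus ?thesis using ok by blast
qed

theorem extend_hom: "\<exists>\<psi>\<in>hom E D. \<forall>s\<in>S. \<psi> s = \<phi> s"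
proof -
  obtain M where ok: "okrel M" and dom: "Domain M = carrier E" using exists_total by blast
  have "psi M \<in> hom (E\<lparr>carrier := carrier E\<rparr>) D" using psi_hom[OF ok] dom by simp
  hence "psi M \<in> hom E D" by simp
  moreover have "\<forall>s\<in>S. psi M s = \<phi> s" using psi_eq[OF ok okrel_S[OF ok]] by blast
  ultimately show ?thesis by blast
qed

end

lemma (in group) lcomm:
  assumes "a \<in> carrier G" "b \<in> carrier G" "z \<in> carrier G" "b \<otimes> a = a \<otimes> b"
  shows "b \<otimes> (a \<otimes> z) = a \<otimes> (b \<otimes> z)"
  using assms by (simp add: m_assoc[symmetric])

lemma (in group) comm_split:
  assumes sA: "subgroup A1 G" and sB: "subgroup B1 G" and cm: "\<forall>a\<in>A1. \<forall>b\<in>B1. a \<otimes> b = b \<otimes> a"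
    and x1: "x1 \<in> A1" and y1: "y1 \<in> A1" and x2: "x2 \<in> B1" and y2: "y2 \<in> B1"
  shows "x1 \<otimes> x2 \<otimes> (y1 \<otimes> y2) \<otimes> inv (x1 \<otimes> x2) \<otimes> inv (y1 \<otimes> y2)
       = (x1 \<otimes> y1 \<otimes> inv x1 \<otimes> inv y1) \<otimes> (x2 \<otimes> y2 \<otimes> inv x2 \<otimes> inv y2)"
proof -
  have cA: "a \<in> carrier G" if "a \<in> A1" for a using subgroup.subset[OF sA] that by blast
  have cB: "b \<in> carrier G" if "b \<in> B1" for b using subgroup.subset[OF sB] that by blast
  have lc: "b \<otimes> (a \<otimes> z) = a \<otimes> (b \<otimes> z)" if "a \<in> A1" "b \<in> B1" "z \<in> carrier G" for a b z
    using lcomm[OF cA[OF that(1)] cB[OF that(2)] that(3)] cm that(1,2) by metis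
  have ix1: "inv x1 \<in> A1" and iy1: "inv y1 \<in> A1" using x1 y1 subgroup.m_inv_closed[OF sA] by blast+
  have ix2: "inv x2 \<in> B1" and iy2: "inv y2 \<in> B1" using x2 y2 subgroup.m_inv_closed[OF sB] by blast+
  have i1: "inv (x1 \<otimes> x2) = inv x1 \<otimes> inv x2"
    using inv_mult_group[OF cA[OF x1] cB[OF x2]] cm ix1 ix2 by metis
  have i2: "inv (y1 \<otimes> y2) = inv y1 \<otimes> inv y2"
    using inv_mult_group[OF cA[OF y1] cB[OF y2]] cm iy1 iy2 by metis
  have c: "x1 \<in> carrier G" "y1 \<in> carrier G" "x2 \<in> carrier G" "y2 \<in> carrier G"
     "inv x1 \<in> carrier G" "inv y1 \<in> carrier G" "inv x2 \<in> carrier G" "inv y2 \<in> carrier G"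
    using cA cB x1 y1 x2 y2 ix1 iy1 ix2 iy2 by blast+
  show ?thesis unfolding i1 i2
    using c x1 y1 x2 y2 ix1 iy1 ix2 iy2
    by (simp add: m_assoc lc[OF y1 x2] lc[OF ix1 y2] lc[OF ix1 x2] lc[OF iy1 ix2] lc[OF iy1 y2] lc[OF iy1 x2])
qed

lemma glue:
  assumes gE: "group E" and cD: "comm_group D" and sA: "subgroup A E" and sB: "subgroup B E"
    and cm: "\<forall>a\<in>A. \<forall>b\<in>B. a \<otimes>\<^bsub>E\<^esub> b = b \<otimes>\<^bsub>E\<^esub> a"
    and hA: "rA \<in> hom (E\<lparr>carrier := A\<rparr>) D" and hB: "rB \<in> hom (E\<lparr>carrier := B\<rparr>) D"
    and ag: "\<forall>x\<in>A \<inter> B. rA x = rB x"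
    and phidef: "\<phi> = (\<lambda>x. (\<lambda>p. rA (fst p) \<otimes>\<^bsub>D\<^esub> rB (snd p)) (SOME p. fst p \<in> A \<and> snd p \<in> B \<and> x = fst p \<otimes>\<^bsub>E\<^esub> snd p))"
  shows "subgroup (A <#>\<^bsub>E\<^esub> B) E" "\<forall>a\<in>A. \<forall>b\<in>B. \<phi> (a \<otimes>\<^bsub>E\<^esub> b) = rA a \<otimes>\<^bsub>D\<^esub> rB b"
    "\<phi> \<in> hom (E\<lparr>carrier := A <#>\<^bsub>E\<^esub> B\<rparr>) D"
proof -
  interpret E: group E by (rule gE)
  interpret D: comm_group D by (rule cD)
  have cA: "a \<in> carrier E" if "a \<in> A" for a using subgroup.subset[OF sA] that by blast
  have cB: "b \<in> carrier E" if "b \<in> B" for b using subgroup.subset[OF sB] that by blast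
  have ghA: "group_hom (E\<lparr>carrier := A\<rparr>) D rA"
    using hA subgroup.subgroup_is_group[OF sA gE] D.is_group by (simp add: group_hom_def group_hom_axioms_def)
  have ghB: "group_hom (E\<lparr>carrier := B\<rparr>) D rB"
    using hB subgroup.subgroup_is_group[OF sB gE] D.is_group by (simp add: group_hom_def group_hom_axioms_def)
  have rAc: "rA a \<in> carrier D" if "a \<in> A" for a using hA that unfolding hom_def by (simp add: Pi_iff)
  have rBc: "rB a \<in> carrier D" if "a \<in> B" for a using hB that unfolding hom_def by (simp add: Pi_iff)
  have rAm: "rA (a \<otimes>\<^bsub>E\<^esub> a') = rA a \<otimes>\<^bsub>D\<^esub> rA a'" if "a \<in> A" "a' \<in> A" for a a'
    using hA that unfolding hom_def by simp
  have rBm: "rB (a \<otimes>\<^bsub>E\<^esub> a') = rB a \<otimes>\<^bsub>D\<^esub> rB a'" if "a \<in> B" "a' \<in> B" for a a'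
    using hB that unfolding hom_def by simp
  have rAi: "rA (inv\<^bsub>E\<^esub> a) = inv\<^bsub>D\<^esub> (rA a)" if "a \<in> A" for a
    using group_hom.hom_inv[OF ghA, of a] that E.m_inv_consistent[OF sA that] by simp
  have rBi: "rB (inv\<^bsub>E\<^esub> a) = inv\<^bsub>D\<^esub> (rB a)" if "a \<in> B" for a
    using group_hom.hom_inv[OF ghB, of a] that E.m_inv_consistent[OF sB that] by simp
  have wd: "rA a \<otimes>\<^bsub>D\<^esub> rB b = rA a' \<otimes>\<^bsub>D\<^esub> rB b'"
    if h: "a \<in> A" "b \<in> B" "a' \<in> A" "b' \<in> B" "a \<otimes>\<^bsub>E\<^esub> b = a' \<otimes>\<^bsub>E\<^esub> b'" for a b a' b'
  proof -
    have e: "inv\<^bsub>E\<^esub> a' \<otimes>\<^bsub>E\<^esub> a = b' \<otimes>\<^bsub>E\<^esub> inv\<^bsub>E\<^esub> b"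
      by (rule E.cancel_aux[OF cA[OF h(1)] cB[OF h(2)] cA[OF h(3)] cB[OF h(4)] h(5)])
    have inA: "inv\<^bsub>E\<^esub> a' \<otimes>\<^bsub>E\<^esub> a \<in> A" using sA h(1,3) by (simp add: subgroup.m_closed subgroup.m_inv_closed)
    have inB: "b' \<otimes>\<^bsub>E\<^esub> inv\<^bsub>E\<^esub> b \<in> B" using sB h(2,4) by (simp add: subgroup.m_closed subgroup.m_inv_closed)
    have "rA (inv\<^bsub>E\<^esub> a' \<otimes>\<^bsub>E\<^esub> a) = rB (b' \<otimes>\<^bsub>E\<^esub> inv\<^bsub>E\<^esub> b)"
      using ag inA inB e by simp
    moreover have "rA (inv\<^bsub>E\<^esub> a' \<otimes>\<^bsub>E\<^esub> a) = inv\<^bsub>D\<^esub> (rA a') \<otimes>\<^bsub>D\<^esub> rA a"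
      using rAm rAi h(1,3) sA by (simp add: subgroup.m_inv_closed)
    moreover have "rB (b' \<otimes>\<^bsub>E\<^esub> inv\<^bsub>E\<^esub> b) = rB b' \<otimes>\<^bsub>D\<^esub> inv\<^bsub>D\<^esub> (rB b)"
      using rBm rBi h(2,4) sB by (simp add: subgroup.m_inv_closed)
    ultimately have "inv\<^bsub>D\<^esub> (rA a') \<otimes>\<^bsub>D\<^esub> rA a = rB b' \<otimes>\<^bsub>D\<^esub> inv\<^bsub>D\<^esub> (rB b)" by simp
    thus ?thesis by (rule D.ceq_aux[OF rAc[OF h(3)] rAc[OF h(1)] rBc[OF h(4)] rBc[OF h(2)]])
  qed
  show val: "\<forall>a\<in>A. \<forall>b\<in>B. \<phi> (a \<otimes>\<^bsub>E\<^esub> b) = rA a \<otimes>\<^bsub>D\<^esub> rB b"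
  proof (intro ballI)
    fix a b assume ab: "a \<in> A" "b \<in> B"
    let ?P = "\<lambda>p. fst p \<in> A \<and> snd p \<in> B \<and> a \<otimes>\<^bsub>E\<^esub> b = fst p \<otimes>\<^bsub>E\<^esub> snd p"
    have "?P (a,b)" using ab by simp
    hence P: "?P (SOME p. ?P p)" by (rule someI)
    have "\<phi> (a \<otimes>\<^bsub>E\<^esub> b) = rA (fst (SOME p. ?P p)) \<otimes>\<^bsub>D\<^esub> rB (snd (SOME p. ?P p))"
      unfolding phidef by simp
    also have "\<dots> = rA a \<otimes>\<^bsub>D\<^esub> rB b"
      using wd[OF ab conjunct1[OF P] conjunct1[OF conjunct2[OF P]] conjunct2[OF conjunct2[OF P]]] by (rule sym)
    finally show "\<phi> (a \<otimes>\<^bsub>E\<^esub> b) = rA a \<otimes>\<^bsub>D\<^esub> rB b" .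
  qed
  have ABE: "\<exists>a b. a \<in> A \<and> b \<in> B \<and> x = a \<otimes>\<^bsub>E\<^esub> b" if "x \<in> A <#>\<^bsub>E\<^esub> B" for x
    using that unfolding set_mult_def by blast
  have ABI: "a \<otimes>\<^bsub>E\<^esub> b \<in> A <#>\<^bsub>E\<^esub> B" if "a \<in> A" "b \<in> B" for a b
    using that unfolding set_mult_def by blast
  have rearr: "(a \<otimes>\<^bsub>E\<^esub> b) \<otimes>\<^bsub>E\<^esub> (a' \<otimes>\<^bsub>E\<^esub> b') = (a \<otimes>\<^bsub>E\<^esub> a') \<otimes>\<^bsub>E\<^esub> (b \<otimes>\<^bsub>E\<^esub> b')"
    if h: "a \<in> A" "b \<in> B" "a' \<in> A" "b' \<in> B" for a b a' b'
  proof -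
    have co: "b \<otimes>\<^bsub>E\<^esub> a' = a' \<otimes>\<^bsub>E\<^esub> b" using cm h(2,3) by metis
    have l: "b \<otimes>\<^bsub>E\<^esub> (a' \<otimes>\<^bsub>E\<^esub> b') = a' \<otimes>\<^bsub>E\<^esub> (b \<otimes>\<^bsub>E\<^esub> b')"
      by (rule E.lcomm[OF cA[OF h(3)] cB[OF h(2)] cB[OF h(4)] co])
    have "(a \<otimes>\<^bsub>E\<^esub> b) \<otimes>\<^bsub>E\<^esub> (a' \<otimes>\<^bsub>E\<^esub> b') = a \<otimes>\<^bsub>E\<^esub> (b \<otimes>\<^bsub>E\<^esub> (a' \<otimes>\<^bsub>E\<^esub> b'))"
      using cA[OF h(1)] cB[OF h(2)] cA[OF h(3)] cB[OF h(4)] by (simp add: E.m_assoc)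
    also have "\<dots> = a \<otimes>\<^bsub>E\<^esub> (a' \<otimes>\<^bsub>E\<^esub> (b \<otimes>\<^bsub>E\<^esub> b'))" by (simp only: l)
    also have "\<dots> = (a \<otimes>\<^bsub>E\<^esub> a') \<otimes>\<^bsub>E\<^esub> (b \<otimes>\<^bsub>E\<^esub> b')"
      using cA[OF h(1)] cB[OF h(2)] cA[OF h(3)] cB[OF h(4)] by (simp add: E.m_assoc)
    finally show ?thesis .
  qed
  show "subgroup (A <#>\<^bsub>E\<^esub> B) E"
  proof (rule E.subgroupI)
    show "A <#>\<^bsub>E\<^esub> B \<subseteq> carrier E" using ABE cA cB by blast
    show "A <#>\<^bsub>E\<^esub> B \<noteq> {}" using ABI subgroup.one_closed[OF sA] subgroup.one_closed[OF sB] by blast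
  next
    fix x assume "x \<in> A <#>\<^bsub>E\<^esub> B"
    then obtain a b where ab: "a \<in> A" "b \<in> B" "x = a \<otimes>\<^bsub>E\<^esub> b" using ABE by blast
    have ia: "inv\<^bsub>E\<^esub> a \<in> A" and ib: "inv\<^bsub>E\<^esub> b \<in> B" using ab sA sB by (simp_all add: subgroup.m_inv_closed)
    have "inv\<^bsub>E\<^esub> x = inv\<^bsub>E\<^esub> b \<otimes>\<^bsub>E\<^esub> inv\<^bsub>E\<^esub> a" using ab cA cB by (simp add: E.inv_mult_group)
    also have "\<dots> = inv\<^bsub>E\<^esub> a \<otimes>\<^bsub>E\<^esub> inv\<^bsub>E\<^esub> b" using cm ia ib by metis
    finally show "inv\<^bsub>E\<^esub> x \<in> A <#>\<^bsub>E\<^esub> B" using ABI[OF ia ib] by simp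
  next
    fix x y assume "x \<in> A <#>\<^bsub>E\<^esub> B" "y \<in> A <#>\<^bsub>E\<^esub> B"
    then obtain a b a' b' where ab: "a \<in> A" "b \<in> B" "x = a \<otimes>\<^bsub>E\<^esub> b" "a' \<in> A" "b' \<in> B" "y = a' \<otimes>\<^bsub>E\<^esub> b'"
      using ABE by metis
    have "a \<otimes>\<^bsub>E\<^esub> a' \<in> A" "b \<otimes>\<^bsub>E\<^esub> b' \<in> B" using ab sA sB by (simp_all add: subgroup.m_closed)
    thus "x \<otimes>\<^bsub>E\<^esub> y \<in> A <#>\<^bsub>E\<^esub> B" using ABI rearr ab by simp
  qed
  show "\<phi> \<in> hom (E\<lparr>carrier := A <#>\<^bsub>E\<^esub> B\<rparr>) D"
  proof (rule homI)
    fix x assume "x \<in> carrier (E\<lparr>carrier := A <#>\<^bsub>E\<^esub> B\<rparr>)"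
    then obtain a b where ab: "a \<in> A" "b \<in> B" "x = a \<otimes>\<^bsub>E\<^esub> b" using ABE by (metis restr_carrier)
    show "\<phi> x \<in> carrier D" using val ab rAc rBc by simp
  next
    fix x y assume "x \<in> carrier (E\<lparr>carrier := A <#>\<^bsub>E\<^esub> B\<rparr>)" "y \<in> carrier (E\<lparr>carrier := A <#>\<^bsub>E\<^esub> B\<rparr>)"
    then obtain a b a' b' where ab: "a \<in> A" "b \<in> B" "x = a \<otimes>\<^bsub>E\<^esub> b" "a' \<in> A" "b' \<in> B" "y = a' \<otimes>\<^bsub>E\<^esub> b'"
      using ABE by (metis restr_carrier)
    have m: "a \<otimes>\<^bsub>E\<^esub> a' \<in> A" "b \<otimes>\<^bsub>E\<^esub> b' \<in> B" using ab sA sB by (simp_all add: subgroup.m_closed)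
    have "\<phi> (x \<otimes>\<^bsub>E\<^esub> y) = rA (a \<otimes>\<^bsub>E\<^esub> a') \<otimes>\<^bsub>D\<^esub> rB (b \<otimes>\<^bsub>E\<^esub> b')"
      using val m rearr ab by simp
    also have "\<dots> = (rA a \<otimes>\<^bsub>D\<^esub> rA a') \<otimes>\<^bsub>D\<^esub> (rB b \<otimes>\<^bsub>D\<^esub> rB b')" using rAm rBm ab by simp
    also have "\<dots> = (rA a \<otimes>\<^bsub>D\<^esub> rB b) \<otimes>\<^bsub>D\<^esub> (rA a' \<otimes>\<^bsub>D\<^esub> rB b')"
      by (rule D.swap_aux[OF rAc[OF ab(1)] rAc[OF ab(4)] rBc[OF ab(2)] rBc[OF ab(5)]])
    also have "\<dots> = \<phi> x \<otimes>\<^bsub>D\<^esub> \<phi> y" using val ab by simp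
    finally show "\<phi> (x \<otimes>\<^bsub>E\<lparr>carrier := A <#>\<^bsub>E\<^esub> B\<rparr>\<^esub> y) = \<phi> x \<otimes>\<^bsub>D\<^esub> \<phi> y" by simp
  qed
qed


lemma (in comm_group) quot_aux:
  assumes "a1 \<in> carrier G" "b1 \<in> carrier G" "c1 \<in> carrier G" "d1 \<in> carrier G"
    "a2 \<in> carrier G" "b2 \<in> carrier G" "c2 \<in> carrier G" "d2 \<in> carrier G"
    "a1 \<otimes> b1 = c1 \<otimes> d1" "a2 \<otimes> b2 = c2 \<otimes> d2"
  shows "(a1 \<otimes> inv a2) \<otimes> (b1 \<otimes> inv b2) = (c1 \<otimes> inv c2) \<otimes> (d1 \<otimes> inv d2)"
proof -
  have "(a1 \<otimes> inv a2) \<otimes> (b1 \<otimes> inv b2) = (a1 \<otimes> b1) \<otimes> inv (a2 \<otimes> b2)"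
    using assms(1-8) by (simp add: inv_mult m_ac)
  also have "\<dots> = (c1 \<otimes> d1) \<otimes> inv (c2 \<otimes> d2)" by (simp only: assms(9,10))
  also have "\<dots> = (c1 \<otimes> inv c2) \<otimes> (d1 \<otimes> inv d2)"
    using assms(1-8) by (simp add: inv_mult m_ac)
  finally show ?thesis .
qed

lemma (in group) cancel_l2 [simp]: "a \<in> carrier G \<Longrightarrow> b \<in> carrier G \<Longrightarrow> a \<otimes> (inv a \<otimes> b) = b"
  by (simp add: m_assoc[symmetric])
lemma (in group) cancel_r2 [simp]: "a \<in> carrier G \<Longrightarrow> b \<in> carrier G \<Longrightarrow> a \<otimes> inv b \<otimes> b = a"
  by (simp add: m_assoc)

lemma (in comm_group) sym_aux:
  assumes "a1 \<in> carrier G" "b1 \<in> carrier G" "a2 \<in> carrier G" "b2 \<in> carrier G"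
    "a1 \<otimes> inv b1 = a2 \<otimes> inv b2"
  shows "a1 \<otimes> inv a2 = b1 \<otimes> inv b2"
proof -
  have "a1 \<otimes> inv a2 = (a1 \<otimes> inv b1) \<otimes> b1 \<otimes> inv a2" using assms(1-4) by simp
  also have "\<dots> = (a2 \<otimes> inv b2) \<otimes> b1 \<otimes> inv a2" by (simp only: assms(5))
  also have "\<dots> = inv a2 \<otimes> ((a2 \<otimes> inv b2) \<otimes> b1)" using assms(1-4) by (simp only: m_comm m_closed inv_closed)
  also have "\<dots> = inv a2 \<otimes> (a2 \<otimes> (inv b2 \<otimes> b1))" using assms(1-4) by (simp add: m_assoc)
  also have "\<dots> = inv b2 \<otimes> b1" using assms(1-4) by simp
  also have "\<dots> = b1 \<otimes> inv b2" using assms(1-4) by (simp add: m_comm)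
  finally show ?thesis .
qed

lemma (in comm_group) cancel_right_aux:
  assumes "a \<in> carrier G" "b \<in> carrier G" "c \<in> carrier G" "a \<otimes> c = b \<otimes> c"
  shows "a = b"
  using assms by (metis cancel_r)

definition twist :: "('g,'a) monoid_scheme \<Rightarrow> ('d,'b) monoid_scheme \<Rightarrow> ('g \<Rightarrow> 'g \<Rightarrow> 'd) \<Rightarrow> ('d \<times> 'g) monoid" where
  "twist G D f = \<lparr>carrier = carrier D \<times> carrier G,
     Group.monoid.mult = (\<lambda>x y. (fst x \<otimes>\<^bsub>D\<^esub> fst y \<otimes>\<^bsub>D\<^esub> f (snd x) (snd y), snd x \<otimes>\<^bsub>G\<^esub> snd y)),
     Group.monoid.one = (inv\<^bsub>D\<^esub> (f \<one>\<^bsub>G\<^esub> \<one>\<^bsub>G\<^esub>), \<one>\<^bsub>G\<^esub>)\<rparr>"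

lemma twist_carrier [simp]: "carrier (twist G D f) = carrier D \<times> carrier G"
  by (simp add: twist_def)
lemma twist_mult [simp]: "(a,g) \<otimes>\<^bsub>twist G D f\<^esub> (b,h) = (a \<otimes>\<^bsub>D\<^esub> b \<otimes>\<^bsub>D\<^esub> f g h, g \<otimes>\<^bsub>G\<^esub> h)"
  by (simp add: twist_def)
lemma twist_one [simp]: "\<one>\<^bsub>twist G D f\<^esub> = (inv\<^bsub>D\<^esub> (f \<one>\<^bsub>G\<^esub> \<one>\<^bsub>G\<^esub>), \<one>\<^bsub>G\<^esub>)"
  by (simp add: twist_def)

locale cocyc = G: group G + D: comm_group D for G (structure) and D +
  fixes f
  assumes fc: "\<And>g h. g \<in> carrier G \<Longrightarrow> h \<in> carrier G \<Longrightarrow> f g h \<in> carrier D"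
    and fcoc: "\<And>g h k. g \<in> carrier G \<Longrightarrow> h \<in> carrier G \<Longrightarrow> k \<in> carrier G \<Longrightarrow>
       f g h \<otimes>\<^bsub>D\<^esub> f (g \<otimes> h) k = f h k \<otimes>\<^bsub>D\<^esub> f g (h \<otimes> k)"
begin

lemma f1h: "h \<in> carrier G \<Longrightarrow> f \<one> h = f \<one> \<one>"
proof -
  assume h: "h \<in> carrier G"
  have "f \<one> \<one> \<otimes>\<^bsub>D\<^esub> f \<one> h = f \<one> h \<otimes>\<^bsub>D\<^esub> f \<one> h"
    using fcoc[of \<one> \<one> h] h by simp
  thus ?thesis using D.cancel_right_aux fc h D.m_comm by (metis G.one_closed)
qed

lemma fg1: "g \<in> carrier G \<Longrightarrow> f g \<one> = f \<one> \<one>"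
proof -
  assume g: "g \<in> carrier G"
  have "f g \<one> \<otimes>\<^bsub>D\<^esub> f g \<one> = f \<one> \<one> \<otimes>\<^bsub>D\<^esub> f g \<one>"
    using fcoc[of g \<one> \<one>] g by simp
  thus ?thesis using D.cancel_right_aux fc g by (metis G.one_closed)
qed

abbreviation "E \<equiv> twist G D f"

lemma E_group: "group E"
proof (rule groupI)
  fix x y assume "x \<in> carrier E" "y \<in> carrier E"
  hence "fst x \<in> carrier D" "snd x \<in> carrier G" "fst y \<in> carrier D" "snd y \<in> carrier G"
    by (simp_all add: mem_Times_iff)
  thus "x \<otimes>\<^bsub>E\<^esub> y \<in> carrier E" using fc by (simp add: twist_def mem_Times_iff)
next
  show "\<one>\<^bsub>E\<^esub> \<in> carrier E" using fc by simp
next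
  fix x y z assume xyzc: "x \<in> carrier E" "y \<in> carrier E" "z \<in> carrier E"
  obtain a g where xa: "x = (a,g)" by (cases x)
  obtain b h where yb: "y = (b,h)" by (cases y)
  obtain c k where zc: "z = (c,k)" by (cases z)
  have xyz: "x = (a,g)" "y = (b,h)" "z = (c,k)"
    "a \<in> carrier D" "b \<in> carrier D" "c \<in> carrier D" "g \<in> carrier G" "h \<in> carrier G" "k \<in> carrier G"
    using xyzc xa yb zc by simp_all
  have co: "f g h \<otimes>\<^bsub>D\<^esub> f (g \<otimes> h) k = f h k \<otimes>\<^bsub>D\<^esub> f g (h \<otimes> k)" using fcoc xyz by simp
  have "a \<otimes>\<^bsub>D\<^esub> b \<otimes>\<^bsub>D\<^esub> f g h \<otimes>\<^bsub>D\<^esub> c \<otimes>\<^bsub>D\<^esub> f (g \<otimes> h) k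
      = a \<otimes>\<^bsub>D\<^esub> b \<otimes>\<^bsub>D\<^esub> c \<otimes>\<^bsub>D\<^esub> (f g h \<otimes>\<^bsub>D\<^esub> f (g \<otimes> h) k)"
    using xyz fc by (simp add: D.m_ac)
  also have "\<dots> = a \<otimes>\<^bsub>D\<^esub> b \<otimes>\<^bsub>D\<^esub> c \<otimes>\<^bsub>D\<^esub> (f h k \<otimes>\<^bsub>D\<^esub> f g (h \<otimes> k))" by (simp only: co)
  also have "\<dots> = a \<otimes>\<^bsub>D\<^esub> (b \<otimes>\<^bsub>D\<^esub> c \<otimes>\<^bsub>D\<^esub> f h k) \<otimes>\<^bsub>D\<^esub> f g (h \<otimes> k)"
    using xyz fc by (simp add: D.m_ac)
  finally show "x \<otimes>\<^bsub>E\<^esub> y \<otimes>\<^bsub>E\<^esub> z = x \<otimes>\<^bsub>E\<^esub> (y \<otimes>\<^bsub>E\<^esub> z)"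
    using xyz by (simp add: G.m_assoc)
next
  fix x assume "x \<in> carrier E"
  then obtain a g where x: "x = (a,g)" "a \<in> carrier D" "g \<in> carrier G"
    by (metis mem_Times_iff prod.collapse twist_carrier)
  have f11: "f \<one> \<one> \<in> carrier D" using fc by simp
  have "inv\<^bsub>D\<^esub> (f \<one> \<one>) \<otimes>\<^bsub>D\<^esub> a \<otimes>\<^bsub>D\<^esub> f \<one> \<one> = a \<otimes>\<^bsub>D\<^esub> inv\<^bsub>D\<^esub> (f \<one> \<one>) \<otimes>\<^bsub>D\<^esub> f \<one> \<one>"
    using x f11 D.m_comm[of a "inv\<^bsub>D\<^esub> (f \<one> \<one>)"] by simp
  also have "\<dots> = a" using x f11 by simp
  finally have "inv\<^bsub>D\<^esub> (f \<one> \<one>) \<otimes>\<^bsub>D\<^esub> a \<otimes>\<^bsub>D\<^esub> f \<one> \<one> = a" .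
  thus "\<one>\<^bsub>E\<^esub> \<otimes>\<^bsub>E\<^esub> x = x" using x f1h[OF x(3)] by simp
next
  fix x assume "x \<in> carrier E"
  then obtain a g where x: "x = (a,g)" "a \<in> carrier D" "g \<in> carrier G"
    by (metis mem_Times_iff prod.collapse twist_carrier)
  let ?y = "(inv\<^bsub>D\<^esub> (a \<otimes>\<^bsub>D\<^esub> f (inv g) g \<otimes>\<^bsub>D\<^esub> f \<one> \<one>), inv g)"
  have yc: "?y \<in> carrier E" using x fc by simp
  define Xv where "Xv = a \<otimes>\<^bsub>D\<^esub> f (inv g) g"
  have Xc: "Xv \<in> carrier D" unfolding Xv_def using x fc by simp
  have f11: "f \<one> \<one> \<in> carrier D" using fc by simp
  have "inv\<^bsub>D\<^esub> (a \<otimes>\<^bsub>D\<^esub> f (inv g) g \<otimes>\<^bsub>D\<^esub> f \<one> \<one>) \<otimes>\<^bsub>D\<^esub> a \<otimes>\<^bsub>D\<^esub> f (inv g) g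
     = inv\<^bsub>D\<^esub> (Xv \<otimes>\<^bsub>D\<^esub> f \<one> \<one>) \<otimes>\<^bsub>D\<^esub> Xv"
    unfolding Xv_def using x fc by (simp add: D.m_assoc)
  also have "\<dots> = inv\<^bsub>D\<^esub> (f \<one> \<one>)"
    using Xc f11 by (simp add: D.inv_mult_group)
  finally have "inv\<^bsub>D\<^esub> (a \<otimes>\<^bsub>D\<^esub> f (inv g) g \<otimes>\<^bsub>D\<^esub> f \<one> \<one>) \<otimes>\<^bsub>D\<^esub> a \<otimes>\<^bsub>D\<^esub> f (inv g) g = inv\<^bsub>D\<^esub> (f \<one> \<one>)" .
  hence "?y \<otimes>\<^bsub>E\<^esub> x = \<one>\<^bsub>E\<^esub>" using x by simp
  thus "\<exists>y\<in>carrier E. y \<otimes>\<^bsub>E\<^esub> x = \<one>\<^bsub>E\<^esub>" using yc by blast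
qed


lemma E_inv:
  assumes a: "a \<in> carrier D" and g: "g \<in> carrier G"
  shows "inv\<^bsub>E\<^esub> (a,g) = (inv\<^bsub>D\<^esub> (a \<otimes>\<^bsub>D\<^esub> f (inv g) g \<otimes>\<^bsub>D\<^esub> f \<one> \<one>), inv g)"
proof -
  interpret EG: group E by (rule E_group)
  let ?y = "(inv\<^bsub>D\<^esub> (a \<otimes>\<^bsub>D\<^esub> f (inv g) g \<otimes>\<^bsub>D\<^esub> f \<one> \<one>), inv g)"
  have yc: "?y \<in> carrier E" using a g fc by simp
  define Xv where "Xv = a \<otimes>\<^bsub>D\<^esub> f (inv g) g"
  have Xc: "Xv \<in> carrier D" unfolding Xv_def using a g fc by simp
  have f11: "f \<one> \<one> \<in> carrier D" using fc by simp
  have "inv\<^bsub>D\<^esub> (a \<otimes>\<^bsub>D\<^esub> f (inv g) g \<otimes>\<^bsub>D\<^esub> f \<one> \<one>) \<otimes>\<^bsub>D\<^esub> a \<otimes>\<^bsub>D\<^esub> f (inv g) g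
     = inv\<^bsub>D\<^esub> (Xv \<otimes>\<^bsub>D\<^esub> f \<one> \<one>) \<otimes>\<^bsub>D\<^esub> Xv"
    unfolding Xv_def using a g fc by (simp add: D.m_assoc)
  also have "\<dots> = inv\<^bsub>D\<^esub> (f \<one> \<one>)"
    using Xc f11 by (simp add: D.inv_mult_group)
  finally have "inv\<^bsub>D\<^esub> (a \<otimes>\<^bsub>D\<^esub> f (inv g) g \<otimes>\<^bsub>D\<^esub> f \<one> \<one>) \<otimes>\<^bsub>D\<^esub> a \<otimes>\<^bsub>D\<^esub> f (inv g) g = inv\<^bsub>D\<^esub> (f \<one> \<one>)" .
  hence "?y \<otimes>\<^bsub>E\<^esub> (a,g) = \<one>\<^bsub>E\<^esub>" using a g by simp
  thus ?thesis using EG.inv_equality yc a g by simp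
qed

lemma E_mult_gen: "x \<otimes>\<^bsub>E\<^esub> y = (fst x \<otimes>\<^bsub>D\<^esub> fst y \<otimes>\<^bsub>D\<^esub> f (snd x) (snd y), snd x \<otimes> snd y)"
  by (simp add: twist_def)

lemma E_snd_inv: "x \<in> carrier E \<Longrightarrow> snd (inv\<^bsub>E\<^esub> x) = inv (snd x)"
  using E_inv by (metis mem_Times_iff prod.collapse snd_conv twist_carrier)

lemma E_fst_in: "x \<in> carrier E \<Longrightarrow> fst x \<in> carrier D"
  by (simp add: mem_Times_iff)

lemma sub_prod:
  assumes L: "subgroup L G"
  shows "subgroup (carrier D \<times> L) E"
proof -
  interpret EG: group E by (rule E_group)
  have Lc: "L \<subseteq> carrier G" using subgroup.subset[OF L] .
  show ?thesis
  proof (rule EG.subgroupI)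
    show "carrier D \<times> L \<subseteq> carrier E" using Lc by auto
    show "carrier D \<times> L \<noteq> {}" using subgroup.one_closed[OF L] by blast
  next
    fix x assume x: "x \<in> carrier D \<times> L"
    hence xc: "x \<in> carrier E" using Lc by auto
    have "snd (inv\<^bsub>E\<^esub> x) \<in> L" using E_snd_inv[OF xc] x subgroup.m_inv_closed[OF L] by (simp add: mem_Times_iff)
    moreover have "fst (inv\<^bsub>E\<^esub> x) \<in> carrier D" using E_fst_in EG.inv_closed[OF xc] by blast
    ultimately show "inv\<^bsub>E\<^esub> x \<in> carrier D \<times> L" by (simp add: mem_Times_iff)
  next
    fix x y assume x: "x \<in> carrier D \<times> L" and y: "y \<in> carrier D \<times> L"
    have "snd x \<in> L" "snd y \<in> L" "fst x \<in> carrier D" "fst y \<in> carrier D" using x y by (simp_all add: mem_Times_iff)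
    thus "x \<otimes>\<^bsub>E\<^esub> y \<in> carrier D \<times> L"
      using fc Lc subgroup.m_closed[OF L] unfolding E_mult_gen by (simp add: mem_Times_iff subset_iff)
  qed
qed

end

lemma (in comm_group) cob_aux:
  assumes "a \<in> carrier G" "b \<in> carrier G" "p \<in> carrier G" "q \<in> carrier G" "r \<in> carrier G"
  shows "a \<otimes> b \<otimes> (p \<otimes> inv q \<otimes> r) \<otimes> q = (a \<otimes> r) \<otimes> (b \<otimes> p)"
proof -
  have "p \<otimes> inv q \<otimes> r = p \<otimes> r \<otimes> inv q" using assms by (simp add: m_ac)
  hence "a \<otimes> b \<otimes> (p \<otimes> inv q \<otimes> r) \<otimes> q = a \<otimes> b \<otimes> (p \<otimes> r) \<otimes> inv q \<otimes> q"
    using assms by (simp add: m_assoc)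
  also have "\<dots> = a \<otimes> b \<otimes> (p \<otimes> r)" using assms by simp
  also have "\<dots> = (a \<otimes> r) \<otimes> (b \<otimes> p)" using assms by (simp add: m_ac)
  finally show ?thesis .
qed

lemma (in comm_group) commutator_one:
  assumes "p \<in> carrier G" "q \<in> carrier G"
  shows "p \<otimes> q \<otimes> inv p \<otimes> inv q = \<one>"
proof -
  have "p \<otimes> q \<otimes> inv p \<otimes> inv q = q \<otimes> p \<otimes> inv p \<otimes> inv q" using assms m_comm[of p q] by simp
  also have "\<dots> = q \<otimes> inv q" using assms by simp
  also have "\<dots> = \<one>" using assms by simp
  finally show ?thesis .
qed

lemma (in comm_group) solve_aux:
  assumes "p \<in> carrier G" "q \<in> carrier G" "r \<in> carrier G" "s \<in> carrier G" "p \<otimes> q = r \<otimes> s"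
  shows "p = s \<otimes> inv q \<otimes> r"
proof -
  have "p = p \<otimes> q \<otimes> inv q" using assms(1,2) by simp
  also have "\<dots> = r \<otimes> s \<otimes> inv q" by (simp only: assms(5))
  also have "\<dots> = s \<otimes> inv q \<otimes> r" using assms by (simp add: m_ac)
  finally show ?thesis .
qed

locale cp = cocyc +
  fixes H K cH cK
  assumes subH: "subgroup H G" and subK: "subgroup K G"
    and HK: "carrier G = H <#> K"
    and cmHK: "\<forall>h\<in>H. \<forall>k\<in>K. h \<otimes> k = k \<otimes> h"
    and dd: "derived G H \<inter> derived G K = {\<one>}"
    and divD: "divisible_group D"
    and cHc: "\<forall>g\<in>H. cH g \<in> carrier D"
    and cobH: "\<forall>g\<in>H. \<forall>h\<in>H. f g h = cH h \<otimes>\<^bsub>D\<^esub> inv\<^bsub>D\<^esub> (cH (g \<otimes> h)) \<otimes>\<^bsub>D\<^esub> cH g"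
    and cKc: "\<forall>g\<in>K. cK g \<in> carrier D"
    and cobK: "\<forall>g\<in>K. \<forall>h\<in>K. f g h = cK h \<otimes>\<^bsub>D\<^esub> inv\<^bsub>D\<^esub> (cK (g \<otimes> h)) \<otimes>\<^bsub>D\<^esub> cK g"
    and symf: "\<forall>h\<in>H. \<forall>k\<in>K. f h k = f k h"
begin

lemma Hc: "h \<in> H \<Longrightarrow> h \<in> carrier G" using subgroup.subset[OF subH] by blast
lemma Kc: "h \<in> K \<Longrightarrow> h \<in> carrier G" using subgroup.subset[OF subK] by blast

lemma c_one_gen:
  assumes L: "subgroup L G" and cc: "\<forall>g\<in>L. c g \<in> carrier D"
    and cob: "\<forall>g\<in>L. \<forall>h\<in>L. f g h = c h \<otimes>\<^bsub>D\<^esub> inv\<^bsub>D\<^esub> (c (g \<otimes> h)) \<otimes>\<^bsub>D\<^esub> c g"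
  shows "c \<one> = f \<one> \<one>"
proof -
  have o: "\<one> \<in> L" using subgroup.one_closed[OF L] .
  have "f \<one> \<one> = c \<one> \<otimes>\<^bsub>D\<^esub> inv\<^bsub>D\<^esub> (c \<one>) \<otimes>\<^bsub>D\<^esub> c \<one>" using cob o by simp
  thus ?thesis using cc o by simp
qed

lemma r_hom_gen:
  assumes L: "subgroup L G" and cc: "\<forall>g\<in>L. c g \<in> carrier D"
    and cob: "\<forall>g\<in>L. \<forall>h\<in>L. f g h = c h \<otimes>\<^bsub>D\<^esub> inv\<^bsub>D\<^esub> (c (g \<otimes> h)) \<otimes>\<^bsub>D\<^esub> c g"
    and L': "L' \<subseteq> L"
  shows "(\<lambda>x. fst x \<otimes>\<^bsub>D\<^esub> c (snd x)) \<in> hom (E\<lparr>carrier := carrier D \<times> L'\<rparr>) D"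
proof (rule homI)
  fix x assume "x \<in> carrier (E\<lparr>carrier := carrier D \<times> L'\<rparr>)"
  hence "fst x \<in> carrier D" "snd x \<in> L" using L' by (auto simp: mem_Times_iff)
  thus "fst x \<otimes>\<^bsub>D\<^esub> c (snd x) \<in> carrier D" using cc by simp
next
  fix x y assume "x \<in> carrier (E\<lparr>carrier := carrier D \<times> L'\<rparr>)" "y \<in> carrier (E\<lparr>carrier := carrier D \<times> L'\<rparr>)"
  hence xy: "fst x \<in> carrier D" "snd x \<in> L" "fst y \<in> carrier D" "snd y \<in> L" using L' by (auto simp: mem_Times_iff)
  have gh: "snd x \<otimes> snd y \<in> L" using subgroup.m_closed[OF L xy(2,4)] .
  have "fst (x \<otimes>\<^bsub>E\<^esub> y) \<otimes>\<^bsub>D\<^esub> c (snd (x \<otimes>\<^bsub>E\<^esub> y))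
     = fst x \<otimes>\<^bsub>D\<^esub> fst y \<otimes>\<^bsub>D\<^esub> (c (snd y) \<otimes>\<^bsub>D\<^esub> inv\<^bsub>D\<^esub> (c (snd x \<otimes> snd y)) \<otimes>\<^bsub>D\<^esub> c (snd x)) \<otimes>\<^bsub>D\<^esub> c (snd x \<otimes> snd y)"
    unfolding E_mult_gen using cob xy by simp
  also have "\<dots> = (fst x \<otimes>\<^bsub>D\<^esub> c (snd x)) \<otimes>\<^bsub>D\<^esub> (fst y \<otimes>\<^bsub>D\<^esub> c (snd y))"
    by (rule D.cob_aux) (use xy cc gh in auto)
  finally show "fst (x \<otimes>\<^bsub>E\<lparr>carrier := carrier D \<times> L'\<rparr>\<^esub> y) \<otimes>\<^bsub>D\<^esub> c (snd (x \<otimes>\<^bsub>E\<lparr>carrier := carrier D \<times> L'\<rparr>\<^esub> y))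
     = (fst x \<otimes>\<^bsub>D\<^esub> c (snd x)) \<otimes>\<^bsub>D\<^esub> (fst y \<otimes>\<^bsub>D\<^esub> c (snd y))" by (simp only: restr_mult)
qed


lemma cD: "comm_group D" by (rule D.comm_group_axioms)

abbreviation "H' \<equiv> derived G H"
abbreviation "K' \<equiv> derived G K"

lemma subH': "subgroup H' G" using G.derived_is_subgroup[OF subgroup.subset[OF subH]] .
lemma subK': "subgroup K' G" using G.derived_is_subgroup[OF subgroup.subset[OF subK]] .
lemma H'H: "H' \<subseteq> H" using G.derived_incl[OF order_refl subH] .
lemma K'K: "K' \<subseteq> K" using G.derived_incl[OF order_refl subK] .

lemma EHK_comm:
  assumes x: "x \<in> carrier D \<times> H" and y: "y \<in> carrier D \<times> K"
  shows "x \<otimes>\<^bsub>E\<^esub> y = y \<otimes>\<^bsub>E\<^esub> x"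
proof -
  have xy: "fst x \<in> carrier D" "snd x \<in> H" "fst y \<in> carrier D" "snd y \<in> K"
    using x y by (simp_all add: mem_Times_iff)
  have "f (snd x) (snd y) = f (snd y) (snd x)" using symf xy by blast
  moreover have "snd x \<otimes> snd y = snd y \<otimes> snd x" using cmHK xy by blast
  moreover have "fst x \<otimes>\<^bsub>D\<^esub> fst y = fst y \<otimes>\<^bsub>D\<^esub> fst x" using D.m_comm xy by blast
  ultimately show ?thesis unfolding E_mult_gen by simp
qed

lemma comm_in_derived:
  assumes "h1 \<in> H" "h2 \<in> H"
  shows "h1 \<otimes> h2 \<otimes> inv h1 \<otimes> inv h2 \<in> H'"
  unfolding derived_def by (rule generate.incl) (use assms in blast)

lemma comm_in_derivedK:
  assumes "h1 \<in> K" "h2 \<in> K"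
  shows "h1 \<otimes> h2 \<otimes> inv h1 \<otimes> inv h2 \<in> K'"
  unfolding derived_def by (rule generate.incl) (use assms in blast)

lemma snd_comm:
  assumes "x \<in> carrier E" "y \<in> carrier E"
  shows "snd (x \<otimes>\<^bsub>E\<^esub> y \<otimes>\<^bsub>E\<^esub> inv\<^bsub>E\<^esub> x \<otimes>\<^bsub>E\<^esub> inv\<^bsub>E\<^esub> y) = snd x \<otimes> snd y \<otimes> inv (snd x) \<otimes> inv (snd y)"
  using assms by (simp add: E_mult_gen E_snd_inv)

lemma decomp:
  assumes x: "x \<in> carrier E"
  shows "\<exists>x1 x2. x1 \<in> carrier D \<times> H \<and> x2 \<in> carrier D \<times> K \<and> x = x1 \<otimes>\<^bsub>E\<^esub> x2"
proof -
  obtain a g where ag: "x = (a,g)" "a \<in> carrier D" "g \<in> carrier G"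
    using x by (metis mem_Times_iff prod.collapse twist_carrier)
  obtain h k where hk: "h \<in> H" "k \<in> K" "g = h \<otimes> k" using ag(3) HK unfolding set_mult_def by blast
  have fhk: "f h k \<in> carrier D" using fc Hc Kc hk by blast
  have "(a \<otimes>\<^bsub>D\<^esub> inv\<^bsub>D\<^esub> (f h k), h) \<otimes>\<^bsub>E\<^esub> (\<one>\<^bsub>D\<^esub>, k) = (a \<otimes>\<^bsub>D\<^esub> inv\<^bsub>D\<^esub> (f h k) \<otimes>\<^bsub>D\<^esub> \<one>\<^bsub>D\<^esub> \<otimes>\<^bsub>D\<^esub> f h k, h \<otimes> k)"
    by simp
  also have "\<dots> = x" using ag hk fhk by simp
  finally have "x = (a \<otimes>\<^bsub>D\<^esub> inv\<^bsub>D\<^esub> (f h k), h) \<otimes>\<^bsub>E\<^esub> (\<one>\<^bsub>D\<^esub>, k)" by simp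
  moreover have "(a \<otimes>\<^bsub>D\<^esub> inv\<^bsub>D\<^esub> (f h k), h) \<in> carrier D \<times> H" using ag hk fhk by simp
  moreover have "(\<one>\<^bsub>D\<^esub>, k) \<in> carrier D \<times> K" using hk by simp
  ultimately show ?thesis by blast
qed

lemma hom_comm_one:
  assumes L: "subgroup L E" and r: "r \<in> hom (E\<lparr>carrier := L\<rparr>) D" and u: "u \<in> L" and v: "v \<in> L"
  shows "r (u \<otimes>\<^bsub>E\<^esub> v \<otimes>\<^bsub>E\<^esub> inv\<^bsub>E\<^esub> u \<otimes>\<^bsub>E\<^esub> inv\<^bsub>E\<^esub> v) = \<one>\<^bsub>D\<^esub>"
proof -
  interpret EG: group E by (rule E_group)
  have gh: "group_hom (E\<lparr>carrier := L\<rparr>) D r"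
    using r subgroup.subgroup_is_group[OF L E_group] D.is_group by (simp add: group_hom_def group_hom_axioms_def)
  have rc: "r w \<in> carrier D" if "w \<in> L" for w using r that unfolding hom_def by (simp add: Pi_iff)
  have rm: "r (w \<otimes>\<^bsub>E\<^esub> w') = r w \<otimes>\<^bsub>D\<^esub> r w'" if "w \<in> L" "w' \<in> L" for w w'
    using r that unfolding hom_def by simp
  have ri: "r (inv\<^bsub>E\<^esub> w) = inv\<^bsub>D\<^esub> (r w)" if "w \<in> L" for w
    using group_hom.hom_inv[OF gh, of w] that EG.m_inv_consistent[OF L that] by simp
  have iu: "inv\<^bsub>E\<^esub> u \<in> L" and iv: "inv\<^bsub>E\<^esub> v \<in> L" using u v subgroup.m_inv_closed[OF L] by blast+
  have m1: "u \<otimes>\<^bsub>E\<^esub> v \<in> L" using subgroup.m_closed[OF L u v] .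
  have m2: "u \<otimes>\<^bsub>E\<^esub> v \<otimes>\<^bsub>E\<^esub> inv\<^bsub>E\<^esub> u \<in> L" using subgroup.m_closed[OF L m1 iu] .
  have "r (u \<otimes>\<^bsub>E\<^esub> v \<otimes>\<^bsub>E\<^esub> inv\<^bsub>E\<^esub> u \<otimes>\<^bsub>E\<^esub> inv\<^bsub>E\<^esub> v) = r u \<otimes>\<^bsub>D\<^esub> r v \<otimes>\<^bsub>D\<^esub> inv\<^bsub>D\<^esub> (r u) \<otimes>\<^bsub>D\<^esub> inv\<^bsub>D\<^esub> (r v)"
    using rm[OF m2 iv] rm[OF m1 iu] rm[OF u v] ri[OF u] ri[OF v] by simp
  also have "\<dots> = \<one>\<^bsub>D\<^esub>" by (rule D.commutator_one[OF rc[OF u] rc[OF v]])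
  finally show ?thesis .
qed


lemma main_cob:
  "\<exists>c. (\<forall>g\<in>carrier G. c g \<in> carrier D) \<and>
       (\<forall>g\<in>carrier G. \<forall>h\<in>carrier G. f g h = c h \<otimes>\<^bsub>D\<^esub> inv\<^bsub>D\<^esub> (c (g \<otimes> h)) \<otimes>\<^bsub>D\<^esub> c g)"
proof -
  interpret EG: group E by (rule E_group)
  define A where "A = carrier D \<times> H'"
  define B where "B = carrier D \<times> K'"
  define EH where "EH = carrier D \<times> H"
  define EK where "EK = carrier D \<times> K"
  define rH where "rH = (\<lambda>x. fst x \<otimes>\<^bsub>D\<^esub> cH (snd x))"
  define rK where "rK = (\<lambda>x. fst x \<otimes>\<^bsub>D\<^esub> cK (snd x))"
  define \<phi> where "\<phi> = (\<lambda>x. (\<lambda>p. rH (fst p) \<otimes>\<^bsub>D\<^esub> rK (snd p)) (SOME p. fst p \<in> A \<and> snd p \<in> B \<and> x = fst p \<otimes>\<^bsub>E\<^esub> snd p))"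
  have sA: "subgroup A E" unfolding A_def by (rule sub_prod[OF subH'])
  have sB: "subgroup B E" unfolding B_def by (rule sub_prod[OF subK'])
  have sEH: "subgroup EH E" unfolding EH_def by (rule sub_prod[OF subH])
  have sEK: "subgroup EK E" unfolding EK_def by (rule sub_prod[OF subK])
  have AEH: "A \<subseteq> EH" unfolding A_def EH_def using H'H by blast
  have BEK: "B \<subseteq> EK" unfolding B_def EK_def using K'K by blast
  have cmE: "\<forall>a\<in>EH. \<forall>b\<in>EK. a \<otimes>\<^bsub>E\<^esub> b = b \<otimes>\<^bsub>E\<^esub> a" unfolding EH_def EK_def using EHK_comm by blast
  have cmAB: "\<forall>a\<in>A. \<forall>b\<in>B. a \<otimes>\<^bsub>E\<^esub> b = b \<otimes>\<^bsub>E\<^esub> a" using cmE AEH BEK by blast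
  have hA: "rH \<in> hom (E\<lparr>carrier := A\<rparr>) D" unfolding rH_def A_def by (rule r_hom_gen[OF subH cHc cobH H'H])
  have hB: "rK \<in> hom (E\<lparr>carrier := B\<rparr>) D" unfolding rK_def B_def by (rule r_hom_gen[OF subK cKc cobK K'K])
  have hEH: "rH \<in> hom (E\<lparr>carrier := EH\<rparr>) D" unfolding rH_def EH_def by (rule r_hom_gen[OF subH cHc cobH order_refl])
  have hEK: "rK \<in> hom (E\<lparr>carrier := EK\<rparr>) D" unfolding rK_def EK_def by (rule r_hom_gen[OF subK cKc cobK order_refl])
  have cH1: "cH \<one> = f \<one> \<one>" by (rule c_one_gen[OF subH cHc cobH])
  have cK1: "cK \<one> = f \<one> \<one>" by (rule c_one_gen[OF subK cKc cobK])
  have ag: "\<forall>x\<in>A \<inter> B. rH x = rK x"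
  proof
    fix x assume "x \<in> A \<inter> B"
    hence "snd x \<in> H' \<inter> K'" unfolding A_def B_def by (auto simp: mem_Times_iff)
    hence "snd x = \<one>" using dd by blast
    thus "rH x = rK x" unfolding rH_def rK_def using cH1 cK1 by simp
  qed
  note gl = glue[OF E_group cD sA sB cmAB hA hB ag \<phi>_def]
  have EHc: "EH \<subseteq> carrier E" using subgroup.subset[OF sEH] .
  have EKc: "EK \<subseteq> carrier E" using subgroup.subset[OF sEK] .
  have commS: "\<forall>a\<in>carrier E. \<forall>b\<in>carrier E. a \<otimes>\<^bsub>E\<^esub> b \<otimes>\<^bsub>E\<^esub> inv\<^bsub>E\<^esub> a \<otimes>\<^bsub>E\<^esub> inv\<^bsub>E\<^esub> b \<in> A <#>\<^bsub>E\<^esub> B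
      \<and> \<phi> (a \<otimes>\<^bsub>E\<^esub> b \<otimes>\<^bsub>E\<^esub> inv\<^bsub>E\<^esub> a \<otimes>\<^bsub>E\<^esub> inv\<^bsub>E\<^esub> b) = \<one>\<^bsub>D\<^esub>"
  proof (intro ballI)
    fix x y assume x: "x \<in> carrier E" and y: "y \<in> carrier E"
    obtain x1 x2 where xx: "x1 \<in> EH" "x2 \<in> EK" "x = x1 \<otimes>\<^bsub>E\<^esub> x2" using decomp[OF x] unfolding EH_def EK_def by blast
    obtain y1 y2 where yy: "y1 \<in> EH" "y2 \<in> EK" "y = y1 \<otimes>\<^bsub>E\<^esub> y2" using decomp[OF y] unfolding EH_def EK_def by blast
    define c1 where "c1 = x1 \<otimes>\<^bsub>E\<^esub> y1 \<otimes>\<^bsub>E\<^esub> inv\<^bsub>E\<^esub> x1 \<otimes>\<^bsub>E\<^esub> inv\<^bsub>E\<^esub> y1"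
    define c2 where "c2 = x2 \<otimes>\<^bsub>E\<^esub> y2 \<otimes>\<^bsub>E\<^esub> inv\<^bsub>E\<^esub> x2 \<otimes>\<^bsub>E\<^esub> inv\<^bsub>E\<^esub> y2"
    have split: "x \<otimes>\<^bsub>E\<^esub> y \<otimes>\<^bsub>E\<^esub> inv\<^bsub>E\<^esub> x \<otimes>\<^bsub>E\<^esub> inv\<^bsub>E\<^esub> y = c1 \<otimes>\<^bsub>E\<^esub> c2"
      unfolding c1_def c2_def xx(3) yy(3) by (rule EG.comm_split[OF sEH sEK cmE xx(1) yy(1) xx(2) yy(2)])
    have c1EH: "c1 \<in> EH" unfolding c1_def using xx(1) yy(1) sEH
      by (simp add: subgroup.m_closed subgroup.m_inv_closed)
    have c2EK: "c2 \<in> EK" unfolding c2_def using xx(2) yy(2) sEK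
      by (simp add: subgroup.m_closed subgroup.m_inv_closed)
    have "snd c1 = snd x1 \<otimes> snd y1 \<otimes> inv (snd x1) \<otimes> inv (snd y1)"
      unfolding c1_def by (rule snd_comm) (use xx(1) yy(1) EHc in blast)+
    moreover have "snd x1 \<in> H" "snd y1 \<in> H" using xx(1) yy(1) unfolding EH_def by (auto simp: mem_Times_iff)
    ultimately have "snd c1 \<in> H'" using comm_in_derived by simp
    hence c1A: "c1 \<in> A" using c1EH unfolding A_def EH_def by (simp add: mem_Times_iff)
    have "snd c2 = snd x2 \<otimes> snd y2 \<otimes> inv (snd x2) \<otimes> inv (snd y2)"
      unfolding c2_def by (rule snd_comm) (use xx(2) yy(2) EKc in blast)+
    moreover have "snd x2 \<in> K" "snd y2 \<in> K" using xx(2) yy(2) unfolding EK_def by (auto simp: mem_Times_iff)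
    ultimately have "snd c2 \<in> K'" using comm_in_derivedK by simp
    hence c2B: "c2 \<in> B" using c2EK unfolding B_def EK_def by (simp add: mem_Times_iff)
    have "c1 \<otimes>\<^bsub>E\<^esub> c2 \<in> A <#>\<^bsub>E\<^esub> B" using c1A c2B unfolding set_mult_def by blast
    moreover have "\<phi> (c1 \<otimes>\<^bsub>E\<^esub> c2) = rH c1 \<otimes>\<^bsub>D\<^esub> rK c2" using gl(2) c1A c2B by blast
    moreover have "rH c1 = \<one>\<^bsub>D\<^esub>" unfolding c1_def by (rule hom_comm_one[OF sEH hEH xx(1) yy(1)])
    moreover have "rK c2 = \<one>\<^bsub>D\<^esub>" unfolding c2_def by (rule hom_comm_one[OF sEK hEK xx(2) yy(2)])
    ultimately show "x \<otimes>\<^bsub>E\<^esub> y \<otimes>\<^bsub>E\<^esub> inv\<^bsub>E\<^esub> x \<otimes>\<^bsub>E\<^esub> inv\<^bsub>E\<^esub> y \<in> A <#>\<^bsub>E\<^esub> B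
      \<and> \<phi> (x \<otimes>\<^bsub>E\<^esub> y \<otimes>\<^bsub>E\<^esub> inv\<^bsub>E\<^esub> x \<otimes>\<^bsub>E\<^esub> inv\<^bsub>E\<^esub> y) = \<one>\<^bsub>D\<^esub>"
      unfolding split by simp
  qed
  have ec: "extctx E D (A <#>\<^bsub>E\<^esub> B) \<phi>"
    unfolding extctx_def extctx_axioms_def using E_group cD divD gl(1) gl(3) commS by blast
  obtain \<psi> where psi: "\<psi> \<in> hom E D" "\<forall>s\<in>A <#>\<^bsub>E\<^esub> B. \<psi> s = \<phi> s"
    using extctx.extend_hom[OF ec] by blast
  have f11: "f \<one> \<one> \<in> carrier D" using fc by simp
  have psi_iota: "\<psi> (d \<otimes>\<^bsub>D\<^esub> inv\<^bsub>D\<^esub> (f \<one> \<one>), \<one>) = d" if d: "d \<in> carrier D" for d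
  proof -
    let ?i = "(d \<otimes>\<^bsub>D\<^esub> inv\<^bsub>D\<^esub> (f \<one> \<one>), \<one>)"
    have iA: "?i \<in> A" unfolding A_def using d f11 subgroup.one_closed[OF subH'] by simp
    have oB: "\<one>\<^bsub>E\<^esub> \<in> B" unfolding B_def using f11 subgroup.one_closed[OF subK'] by simp
    have iE: "?i \<in> carrier E" using d f11 by simp
    have eq: "?i \<otimes>\<^bsub>E\<^esub> \<one>\<^bsub>E\<^esub> = ?i" using EG.r_one[OF iE] .
    have "?i \<otimes>\<^bsub>E\<^esub> \<one>\<^bsub>E\<^esub> \<in> A <#>\<^bsub>E\<^esub> B" using iA oB unfolding set_mult_def by blast
    hence "\<psi> ?i = \<phi> (?i \<otimes>\<^bsub>E\<^esub> \<one>\<^bsub>E\<^esub>)" using psi(2) eq by simp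
    also have "\<dots> = rH ?i \<otimes>\<^bsub>D\<^esub> rK \<one>\<^bsub>E\<^esub>" using gl(2) iA oB by blast
    also have "\<dots> = (d \<otimes>\<^bsub>D\<^esub> inv\<^bsub>D\<^esub> (f \<one> \<one>) \<otimes>\<^bsub>D\<^esub> f \<one> \<one>) \<otimes>\<^bsub>D\<^esub> (inv\<^bsub>D\<^esub> (f \<one> \<one>) \<otimes>\<^bsub>D\<^esub> f \<one> \<one>)"
      unfolding rH_def rK_def using cH1 cK1 by simp
    also have "\<dots> = d" using d f11 by simp
    finally show ?thesis .
  qed
  define c where "c = (\<lambda>g. \<psi> (\<one>\<^bsub>D\<^esub>, g))"
  have cc: "\<forall>g\<in>carrier G. c g \<in> carrier D"
    unfolding c_def using psi(1) by (simp add: hom_in_carrier)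
  have "f g h = c h \<otimes>\<^bsub>D\<^esub> inv\<^bsub>D\<^esub> (c (g \<otimes> h)) \<otimes>\<^bsub>D\<^esub> c g" if g: "g \<in> carrier G" and h: "h \<in> carrier G" for g h
  proof -
    have gh: "g \<otimes> h \<in> carrier G" using g h by simp
    have fgh: "f g h \<in> carrier D" using fc g h by simp
    have e1: "(\<one>\<^bsub>D\<^esub>, g) \<otimes>\<^bsub>E\<^esub> (\<one>\<^bsub>D\<^esub>, h) = (f g h, g \<otimes> h)" using fgh by simp
    have "(f g h \<otimes>\<^bsub>D\<^esub> inv\<^bsub>D\<^esub> (f \<one> \<one>), \<one>) \<otimes>\<^bsub>E\<^esub> (\<one>\<^bsub>D\<^esub>, g \<otimes> h)
        = (f g h \<otimes>\<^bsub>D\<^esub> inv\<^bsub>D\<^esub> (f \<one> \<one>) \<otimes>\<^bsub>D\<^esub> \<one>\<^bsub>D\<^esub> \<otimes>\<^bsub>D\<^esub> f \<one> (g \<otimes> h), \<one> \<otimes> (g \<otimes> h))" by simp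
    also have "\<dots> = (f g h, g \<otimes> h)" using f1h[OF gh] fgh f11 gh by simp
    finally have e2: "(f g h \<otimes>\<^bsub>D\<^esub> inv\<^bsub>D\<^esub> (f \<one> \<one>), \<one>) \<otimes>\<^bsub>E\<^esub> (\<one>\<^bsub>D\<^esub>, g \<otimes> h) = (f g h, g \<otimes> h)" .
    have m1: "(\<one>\<^bsub>D\<^esub>, g) \<in> carrier E" "(\<one>\<^bsub>D\<^esub>, h) \<in> carrier E" "(\<one>\<^bsub>D\<^esub>, g \<otimes> h) \<in> carrier E"
      "(f g h \<otimes>\<^bsub>D\<^esub> inv\<^bsub>D\<^esub> (f \<one> \<one>), \<one>) \<in> carrier E" using g h gh fgh f11 by simp_all
    have "c g \<otimes>\<^bsub>D\<^esub> c h = \<psi> ((\<one>\<^bsub>D\<^esub>, g) \<otimes>\<^bsub>E\<^esub> (\<one>\<^bsub>D\<^esub>, h))"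
      unfolding c_def by (rule hom_mult[OF psi(1) m1(1) m1(2), symmetric])
    also have "\<dots> = \<psi> (f g h, g \<otimes> h)" by (simp only: e1)
    also have "\<dots> = \<psi> ((f g h \<otimes>\<^bsub>D\<^esub> inv\<^bsub>D\<^esub> (f \<one> \<one>), \<one>) \<otimes>\<^bsub>E\<^esub> (\<one>\<^bsub>D\<^esub>, g \<otimes> h))" by (simp only: e2)
    also have "\<dots> = \<psi> (f g h \<otimes>\<^bsub>D\<^esub> inv\<^bsub>D\<^esub> (f \<one> \<one>), \<one>) \<otimes>\<^bsub>D\<^esub> c (g \<otimes> h)"
      unfolding c_def by (rule hom_mult[OF psi(1) m1(4) m1(3)])
    also have "\<dots> = f g h \<otimes>\<^bsub>D\<^esub> c (g \<otimes> h)" using psi_iota[OF fgh] by simp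
    finally have eq: "f g h \<otimes>\<^bsub>D\<^esub> c (g \<otimes> h) = c g \<otimes>\<^bsub>D\<^esub> c h" by (rule sym)
    have "c (g \<otimes> h) \<in> carrier D" "c g \<in> carrier D" "c h \<in> carrier D" using cc g h gh by blast+
    thus ?thesis using D.solve_aux[OF fgh _ _ _ eq] by blast
  qed
  thus ?thesis using cc by blast
qed

end


theorem corollary3p4:
  fixes G :: "('g, 'a) monoid_scheme" and D :: "('d, 'b) monoid_scheme"
    and H K :: "'g set"
  assumes "group G"
    and "H \<lhd> G" and "K \<lhd> G"
    and "carrier G = H <#>\<^bsub>G\<^esub> K"
    and "\<forall>h\<in>H. \<forall>k\<in>K. h \<otimes>\<^bsub>G\<^esub> k = k \<otimes>\<^bsub>G\<^esub> h"
    and "derived G H \<inter> derived G K = {\<one>\<^bsub>G\<^esub>}"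
    and "comm_group D" and "divisible_group D"
    and "cocycle2 G D f1" and "cocycle2 G D f2"
    and "cohomologous2 (restr_grp G H) D f1 f2"
    and "cohomologous2 (restr_grp G K) D f1 f2"
    and "\<forall>h\<in>H. \<forall>k\<in>K. nu_val G D f1 h k = nu_val G D f2 h k"
  shows "cohomologous2 G D f1 f2"
proof -
  interpret G: group G by (rule assms(1))
  interpret D: comm_group D by (rule assms(7))
  define f where "f = (\<lambda>g h. f1 g h \<otimes>\<^bsub>D\<^esub> inv\<^bsub>D\<^esub> (f2 g h))"
  have f1c: "f1 g h \<in> carrier D" if "g \<in> carrier G" "h \<in> carrier G" for g h
    using assms(9) that unfolding cocycle2_def by blast
  have f2c: "f2 g h \<in> carrier D" if "g \<in> carrier G" "h \<in> carrier G" for g h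
    using assms(10) that unfolding cocycle2_def by blast
  have fc: "f g h \<in> carrier D" if "g \<in> carrier G" "h \<in> carrier G" for g h
    unfolding f_def using f1c[OF that] f2c[OF that] by simp
  have fcoc: "f g h \<otimes>\<^bsub>D\<^esub> f (g \<otimes>\<^bsub>G\<^esub> h) k = f h k \<otimes>\<^bsub>D\<^esub> f g (h \<otimes>\<^bsub>G\<^esub> k)"
    if g: "g \<in> carrier G" and h: "h \<in> carrier G" and k: "k \<in> carrier G" for g h k
  proof -
    have c1: "f1 g h \<otimes>\<^bsub>D\<^esub> f1 (g \<otimes>\<^bsub>G\<^esub> h) k = f1 h k \<otimes>\<^bsub>D\<^esub> f1 g (h \<otimes>\<^bsub>G\<^esub> k)"
      using assms(9) g h k unfolding cocycle2_def by blast
    have c2: "f2 g h \<otimes>\<^bsub>D\<^esub> f2 (g \<otimes>\<^bsub>G\<^esub> h) k = f2 h k \<otimes>\<^bsub>D\<^esub> f2 g (h \<otimes>\<^bsub>G\<^esub> k)"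
      using assms(10) g h k unfolding cocycle2_def by blast
    have gh: "g \<otimes>\<^bsub>G\<^esub> h \<in> carrier G" and hk: "h \<otimes>\<^bsub>G\<^esub> k \<in> carrier G" using g h k by simp_all
    show ?thesis unfolding f_def
      by (rule D.quot_aux[OF f1c[OF g h] f1c[OF gh k] f1c[OF h k] f1c[OF g hk]
                             f2c[OF g h] f2c[OF gh k] f2c[OF h k] f2c[OF g hk] c1 c2])
  qed
  have Hs: "subgroup H G" using normal_imp_subgroup[OF assms(2)] .
  have Ks: "subgroup K G" using normal_imp_subgroup[OF assms(3)] .
  have Hc: "H \<subseteq> carrier G" using subgroup.subset[OF Hs] .
  have Kc: "K \<subseteq> carrier G" using subgroup.subset[OF Ks] .
  obtain cH where cH: "\<forall>g\<in>H. cH g \<in> carrier D"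
    "\<forall>g\<in>H. \<forall>h\<in>H. f g h = cH h \<otimes>\<^bsub>D\<^esub> inv\<^bsub>D\<^esub> (cH (g \<otimes>\<^bsub>G\<^esub> h)) \<otimes>\<^bsub>D\<^esub> cH g"
    using assms(11) unfolding cohomologous2_def coboundary2_def f_def by (simp only: restr_carrier restr_mult) blast
  obtain cK where cK: "\<forall>g\<in>K. cK g \<in> carrier D"
    "\<forall>g\<in>K. \<forall>h\<in>K. f g h = cK h \<otimes>\<^bsub>D\<^esub> inv\<^bsub>D\<^esub> (cK (g \<otimes>\<^bsub>G\<^esub> h)) \<otimes>\<^bsub>D\<^esub> cK g"
    using assms(12) unfolding cohomologous2_def coboundary2_def f_def by (simp only: restr_carrier restr_mult) blast
  have symf: "\<forall>h\<in>H. \<forall>k\<in>K. f h k = f k h"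
  proof (intro ballI)
    fix h k assume h: "h \<in> H" and k: "k \<in> K"
    have hc: "h \<in> carrier G" and kc: "k \<in> carrier G" using h k Hc Kc by blast+
    have "f1 h k \<otimes>\<^bsub>D\<^esub> inv\<^bsub>D\<^esub> (f1 k h) = f2 h k \<otimes>\<^bsub>D\<^esub> inv\<^bsub>D\<^esub> (f2 k h)"
      using assms(13) h k unfolding nu_val_def by blast
    thus "f h k = f k h" unfolding f_def
      by (rule D.sym_aux[OF f1c[OF hc kc] f1c[OF kc hc] f2c[OF hc kc] f2c[OF kc hc]])
  qed
  have "cp G D f H K cH cK"
    unfolding cp_def cp_axioms_def cocyc_def cocyc_axioms_def
    using assms(1,4,5,6,7,8) fc fcoc Hs Ks cH cK symf by blast
  then obtain c where c: "\<forall>g\<in>carrier G. c g \<in> carrier D"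
    "\<forall>g\<in>carrier G. \<forall>h\<in>carrier G. f g h = c h \<otimes>\<^bsub>D\<^esub> inv\<^bsub>D\<^esub> (c (g \<otimes>\<^bsub>G\<^esub> h)) \<otimes>\<^bsub>D\<^esub> c g"
    using cp.main_cob by blast
  show ?thesis unfolding cohomologous2_def coboundary2_def
    using c unfolding f_def by blast
qed


end
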